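(* For any $\kappa>0$, there exist $M>1$ and $N\in\mathbb N$ such that for all $n\ge N$, \[\mathbb P\Big(\exists v\in\mathbb T_n: X_v\notin[n/M,Mn]\text{ or }Y_v\notin[n/M,Mn]\text{ or }T_v<n/M\text{ or }T_v+\frac{\mathbbm e_v}{R(X_v,Y_v)}>Mn\Big)\le e^{-\kappa n}.\]
   Context: Let $R(x,y)=\frac{x+1}{y+1}\vee\frac{y+1}{x+1}$ and $P(x,y)=\frac{y+1}{2(x+1)}\mathbb 1_{x\ge y}+(1-\frac{x+1}{2(y+1)})\mathbb 1_{x<y}$. Let $\mathbb T$ be the infinite rooted binary tree with root $\rho$, $\mathbb T_n$ its $n$th generation ($|\mathbb T_n|=2^n$), and write $v1,v2$ for the children of $v$. Attach to each vertex $v$ independent random variables $\mathcal U^{\rm split}_v,\mathcal U^{\rm dir}_v$ uniform on $(0,1)$ and $\mathbbm e_v$ exponential of parameter $1$, all independent over $v$. Set $B_\rho=H_\rho=1$, $T_\rho=0$. Recursively, let $D_v=1$ if $\mathcal U^{\rm dir}_v\le P(-\log B_v,-\log H_v)$ and $D_v=0$ otherwise; if $D_v=1$ set $B_{v1}=\mathcal U^{\rm split}_vB_v$, $B_{v2}=(1-\mathcal U^{\rm split}_v)B_v$, $H_{v1}=H_{v2}=H_v$; if $D_v=0$ set $H_{v1}=\mathcal U^{\rm split}_vH_v$, $H_{v2}=(1-\mathcal U^{\rm split}_v)H_v$, $B_{v1}=B_{v2}=B_v$. Let $X_v=-\log B_v$, $Y_v=-\log H_v$, and $T_{v1}=T_{v2}=T_v+\mathbbm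 e_v/R(X_v,Y_v)$. *)

theory Defs
  imports "HOL-Probability.Probability"
begin

definition Rf :: "real \<Rightarrow> real \<Rightarrow> real" where
  "Rf x y = max ((x+1)/(y+1)) ((y+1)/(x+1))"

definition Pf :: "real \<Rightarrow> real \<Rightarrow> real" where
  "Pf x y = (if x \<ge> y then (y+1)/(2*(x+1)) else 1 - (x+1)/(2*(y+1)))"

(* Vertices of the infinite rooted binary tree: finite words over bool, root = [].
   Children of v: v1 = v @ [False], v2 = v @ [True]. Generation n = words of length n.
   A sample point assigns to each vertex the triple (U_split, U_dir, e). *)
type_synonym vertex = "bool list"
type_synonym sample = "vertex \<Rightarrow> real \<times> real \<times> real"

definition label_measure :: "(real \<times> real \<times> real) measure" where
  "label_measure = uniform_measure lborel {0<..<1} \<Otimes>\<^sub>M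
     (uniform_measure lborel {0<..<1} \<Otimes>\<^sub>M density lborel (exponential_density 1))"

definition tree_space :: "sample measure" where
  "tree_space = (\<Pi>\<^sub>M v\<in>UNIV. label_measure)"

(* one step of the recursion: from state (B_v,H_v,T_v) at vertex v to the state of child c
   (c = False: child v1, c = True: child v2) *)
definition step :: "sample \<Rightarrow> vertex \<Rightarrow> real \<times> real \<times> real \<Rightarrow> bool \<Rightarrow> real \<times> real \<times> real" where
  "step \<omega> v s c =
     (case s of (B, H, T) \<Rightarrow>
      case \<omega> v of (us, ud, e) \<Rightarrow>
       (let X = - ln B; Y = - ln H; D = (ud \<le> Pf X Y);
            frac = (if c then 1 - us else us)
        in (if D then frac * B else B, if D then H else frac * H, T + e / Rf X Y)))"

fun walk :: "sample \<Rightarrow> vertex \<Rightarrow> real \<times> real \<times> real \<Rightarrow> bool list \<Rightarrow> real \<times> real \<times> real" where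
  "walk \<omega> v s [] = s"
| "walk \<omega> v s (c # cs) = walk \<omega> (v @ [c]) (step \<omega> v s c) cs"

definition state :: "sample \<Rightarrow> vertex \<Rightarrow> real \<times> real \<times> real" where
  "state \<omega> w = walk \<omega> [] (1, 1, 0) w"

definition Bv :: "sample \<Rightarrow> vertex \<Rightarrow> real" where "Bv \<omega> v = fst (state \<omega> v)"
definition Hv :: "sample \<Rightarrow> vertex \<Rightarrow> real" where "Hv \<omega> v = fst (snd (state \<omega> v))"
definition Tv :: "sample \<Rightarrow> vertex \<Rightarrow> real" where "Tv \<omega> v = snd (snd (state \<omega> v))"
definition Xv :: "sample \<Rightarrow> vertex \<Rightarrow> real" where "Xv \<omega> v = - ln (Bv \<omega> v)"
definition Yv :: "sample \<Rightarrow> vertex \<Rightarrow> real" where "Yv \<omega> v = - ln (Hv \<omega> v)"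
definition ev :: "sample \<Rightarrow> vertex \<Rightarrow> real" where "ev \<omega> v = snd (snd (\<omega> v))"

end

theory Submission
  imports Defs
begin

type_synonym lab = "real \<times> real \<times> real"

fun gw :: "(nat \<Rightarrow> lab \<Rightarrow> 'st \<Rightarrow> bool \<Rightarrow> 'st) \<Rightarrow> sample \<Rightarrow> nat \<Rightarrow> 'st \<Rightarrow> bool list \<Rightarrow> 'st" where
  "gw stp \<omega> d s [] = s"
| "gw stp \<omega> d s (c # cs) = gw stp (\<lambda>u. \<omega> (c # u)) (Suc d) (stp d (\<omega> []) s c) cs"

lemma space_label: "space label_measure = UNIV"
  by (simp add: label_measure_def space_pair_measure)

lemma sets_label: "sets label_measure = sets (borel :: lab measure)"
  unfolding label_measure_def
  by (simp add: borel_prod[symmetric])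

lemma space_tree: "space tree_space = UNIV"
  by (auto simp: tree_space_def space_PiM space_label)

lemma prob_label: "prob_space label_measure"
  unfolding label_measure_def
  by (intro prob_space_pair prob_space_uniform_measure prob_space_exponential_density) auto

interpretation L: prob_space label_measure by (rule prob_label)

interpretation TP: product_prob_space "\<lambda>_::vertex. label_measure" UNIV
  by unfold_locales

lemma prob_tree: "prob_space tree_space"
  unfolding tree_space_def by (rule TP.P.prob_space_axioms)

lemma shift_meas:
  assumes "F \<in> measurable M tree_space"
  shows "(\<lambda>x u. F x (c # u)) \<in> measurable M tree_space"
  unfolding tree_space_def
  apply (rule measurable_PiM_single')
  using assms unfolding tree_space_def
  by (auto simp: space_label)

lemma root_meas:
  assumes "F \<in> measurable M tree_space"
  shows "(\<lambda>x. F x v) \<in> measurable M label_measure"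
  using assms unfolding tree_space_def by measurable

lemma gw_meas:
  assumes stp: "\<And>d c. (\<lambda>p. stp d (fst p) (snd p) c) \<in> measurable (label_measure \<Otimes>\<^sub>M (borel::'st::topological_space measure)) borel"
  shows "F \<in> measurable M tree_space \<Longrightarrow> g \<in> measurable M borel \<Longrightarrow>
    (\<lambda>x. gw stp (F x) d (g x) w) \<in> measurable M (borel::'st measure)"
proof (induction w arbitrary: F g d)
  case Nil
  then show ?case by simp
next
  case (Cons c cs)
  have "(\<lambda>x. stp d (F x []) (g x) c) \<in> measurable M borel"
    using measurable_compose[OF measurable_Pair[OF root_meas[OF Cons.prems(1)] Cons.prems(2)] stp[of d c]]
    by simp
  then show ?case
    using Cons.IH[OF shift_meas[OF Cons.prems(1)]] by simp
qed

lemma tree_UNIV_insert: "(UNIV::vertex set) = insert [] (UNIV - {[]})" by auto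

lemma upd_meas:
  "(\<lambda>p::lab \<times> sample. (snd p)([] := fst p)) \<in> measurable (label_measure \<Otimes>\<^sub>M (\<Pi>\<^sub>M i\<in>UNIV - {[]}. label_measure)) tree_space"
  unfolding tree_space_def
proof (rule measurable_PiM_single')
  fix i :: vertex
  show "(\<lambda>p::lab \<times> sample. ((snd p)([] := fst p)) i) \<in> measurable (label_measure \<Otimes>\<^sub>M (\<Pi>\<^sub>M i\<in>UNIV - {[]}. label_measure)) label_measure"
  proof (cases "i = []")
    case True then show ?thesis by simp
  next
    case False
    then have "(\<lambda>p::lab \<times> sample. ((snd p)([] := fst p)) i) = (\<lambda>p. snd p i)" by auto
    then show ?thesis using False by simp
  qed
qed (auto simp: space_label)

lemma decomp:
  fixes G :: "lab \<Rightarrow> sample \<Rightarrow> ennreal"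
  assumes G: "(\<lambda>p. G (fst p) (snd p)) \<in> borel_measurable (label_measure \<Otimes>\<^sub>M tree_space)"
  shows "(\<integral>\<^sup>+\<omega>. G (\<omega> []) (\<lambda>u. \<omega> (c # u)) \<partial>tree_space) = (\<integral>\<^sup>+l. (\<integral>\<^sup>+\<omega>'. G l \<omega>' \<partial>tree_space) \<partial>label_measure)"
proof -
  let ?K = "UNIV - {[]} :: vertex set"
  let ?PK = "\<Pi>\<^sub>M i\<in>?K. label_measure"
  interpret PK: prob_space ?PK by (intro prob_space_PiM prob_label)
  have distr1: "distr (label_measure \<Otimes>\<^sub>M ?PK) tree_space (\<lambda>(x, X). X([] := x)) = tree_space"
    using distr_pair_PiM_eq_PiM[of ?K "\<lambda>_. label_measure" "[]"] prob_label
    unfolding tree_space_def by (simp add: tree_UNIV_insert[symmetric])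
  have sh_meas: "(\<lambda>X. \<lambda>n\<in>UNIV. X (c # n)) \<in> measurable ?PK tree_space"
    unfolding tree_space_def by measurable
  have distr2: "distr ?PK tree_space (\<lambda>X. \<lambda>n\<in>UNIV. X (c # n)) = tree_space"
    using distr_PiM_reindex[of ?K "\<lambda>_. label_measure" "\<lambda>n. c # n" UNIV] prob_label
    unfolding tree_space_def by (auto simp: inj_on_def)
  have Gm: "(\<lambda>\<omega>. G (\<omega> []) (\<lambda>u. \<omega> (c # u))) \<in> borel_measurable tree_space"
    using measurable_compose[OF measurable_Pair[OF root_meas[OF measurable_ident_sets[OF refl]] shift_meas[OF measurable_ident_sets[OF refl]]] G]
    by simp
  have "(\<integral>\<^sup>+\<omega>. G (\<omega> []) (\<lambda>u. \<omega> (c # u)) \<partial>tree_space)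
      = (\<integral>\<^sup>+p. G (((snd p)([] := fst p)) []) (\<lambda>u. ((snd p)([] := fst p)) (c # u)) \<partial>(label_measure \<Otimes>\<^sub>M ?PK))"
    apply (subst distr1[symmetric])
    apply (subst nn_integral_distr)
    using upd_meas Gm by (auto simp: case_prod_beta')
  also have "\<dots> = (\<integral>\<^sup>+p. G (fst p) (\<lambda>u. snd p (c # u)) \<partial>(label_measure \<Otimes>\<^sub>M ?PK))"
    by simp
  also have "\<dots> = (\<integral>\<^sup>+x. \<integral>\<^sup>+X. G x (\<lambda>u. X (c # u)) \<partial>?PK \<partial>label_measure)"
  proof (subst PK.nn_integral_fst[symmetric])
    show "(\<lambda>p. G (fst p) (\<lambda>u. snd p (c # u))) \<in> borel_measurable (label_measure \<Otimes>\<^sub>M ?PK)"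
    proof -
      have "(\<lambda>p::lab \<times> sample. (fst p, \<lambda>u. snd p (c # u))) \<in> measurable (label_measure \<Otimes>\<^sub>M ?PK) (label_measure \<Otimes>\<^sub>M tree_space)"
        unfolding tree_space_def
        apply (intro measurable_Pair)
         apply simp
        apply (rule measurable_PiM_single')
        by (auto simp: space_label)
      from measurable_compose[OF this G] show ?thesis by simp
    qed
  qed simp
  also have "\<dots> = (\<integral>\<^sup>+l. (\<integral>\<^sup>+\<omega>'. G l \<omega>' \<partial>tree_space) \<partial>label_measure)"
  proof (intro nn_integral_cong)
    fix x
    have Gx: "G x \<in> borel_measurable tree_space"
      using measurable_Pair2[OF G, of x] by (simp add: space_label)
    have "(\<integral>\<^sup>+\<omega>'. G x \<omega>' \<partial>tree_space) = (\<integral>\<^sup>+X. G x (\<lambda>n\<in>UNIV. X (c # n)) \<partial>?PK)"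
      apply (subst distr2[symmetric])
      apply (subst nn_integral_distr)
      using sh_meas Gx by auto
    then show "(\<integral>\<^sup>+X. G x (\<lambda>u. X (c # u)) \<partial>?PK) = (\<integral>\<^sup>+\<omega>'. G x \<omega>' \<partial>tree_space)"
      by (simp add: restrict_UNIV)
  qed
  finally show ?thesis .
qed

lemma finite_gen: "finite {w::bool list. length w = n}"
  using finite_lists_length_eq[of "UNIV::bool set" n] by simp

lemma gen_Suc_sum:
  fixes h :: "bool list \<Rightarrow> 'a::comm_monoid_add"
  shows "(\<Sum>w\<in>{w::bool list. length w = Suc n}. h w) = (\<Sum>c\<in>UNIV. \<Sum>w\<in>{w. length w = n}. h (c # w))"
proof -
  have eq: "{w::bool list. length w = Suc n} = (\<lambda>(c, w). c # w) ` (UNIV \<times> {w. length w = n})"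
    by (auto simp: length_Suc_conv image_iff)
  have inj: "inj_on (\<lambda>(c, w). c # w) (UNIV \<times> {w::bool list. length w = n})"
    by (auto simp: inj_on_def)
  show ?thesis
    unfolding eq
    by (subst sum.reindex[OF inj]) (simp add: sum.cartesian_product case_prod_beta')
qed

lemma gen_0: "{w::bool list. length w = 0} = {[]}" by auto

locale gwalk =
  fixes stp :: "nat \<Rightarrow> lab \<Rightarrow> 'st::topological_space \<Rightarrow> bool \<Rightarrow> 'st"
  assumes stp_meas: "\<And>d c. (\<lambda>p. stp d (fst p) (snd p) c) \<in> measurable (label_measure \<Otimes>\<^sub>M (borel::'st measure)) borel"
begin

lemma meas:
  "F \<in> measurable M tree_space \<Longrightarrow> g \<in> measurable M borel \<Longrightarrow>
    (\<lambda>x. gw stp (F x) d (g x) w) \<in> measurable M (borel::'st measure)"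
  by (rule gw_meas[OF stp_meas])

lemma root_rec:
  fixes f :: "'st \<Rightarrow> ennreal"
  assumes f: "f \<in> borel_measurable borel"
  shows "(\<integral>\<^sup>+\<omega>. (\<Sum>w\<in>{w. length w = Suc n}. f (gw stp \<omega> d s w)) \<partial>tree_space)
       = (\<Sum>c\<in>UNIV. \<integral>\<^sup>+l. (\<integral>\<^sup>+\<omega>. (\<Sum>w\<in>{w. length w = n}. f (gw stp \<omega> (Suc d) (stp d l s c) w)) \<partial>tree_space) \<partial>label_measure)"
proof -
  define G where "G c l \<omega>' = (\<Sum>w\<in>{w. length w = n}. f (gw stp \<omega>' (Suc d) (stp d l s c) w))" for c l \<omega>'
  have Gm: "(\<lambda>p. G c (fst p) (snd p)) \<in> borel_measurable (label_measure \<Otimes>\<^sub>M tree_space)" for c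
  proof -
    have s1: "(\<lambda>p::lab \<times> sample. stp d (fst p) s c) \<in> measurable (label_measure \<Otimes>\<^sub>M tree_space) borel"
      using measurable_compose[OF measurable_Pair[OF measurable_fst measurable_const[of s]] stp_meas[of d c]]
      by (simp add: space_pair_measure)
    have "(\<lambda>p. gw stp (snd p) (Suc d) (stp d (fst p) s c) w) \<in> measurable (label_measure \<Otimes>\<^sub>M tree_space) borel" for w
      by (rule meas[OF measurable_snd s1])
    then show ?thesis unfolding G_def
      by (intro borel_measurable_sum) (rule measurable_compose[OF _ f])
  qed
  have "(\<integral>\<^sup>+\<omega>. (\<Sum>w\<in>{w. length w = Suc n}. f (gw stp \<omega> d s w)) \<partial>tree_space)
     = (\<integral>\<^sup>+\<omega>. (\<Sum>c\<in>UNIV. G c (\<omega> []) (\<lambda>u. \<omega> (c # u))) \<partial>tree_space)"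
    by (simp add: gen_Suc_sum G_def)
  also have "\<dots> = (\<Sum>c\<in>UNIV. \<integral>\<^sup>+\<omega>. G c (\<omega> []) (\<lambda>u. \<omega> (c # u)) \<partial>tree_space)"
  proof (rule nn_integral_sum)
    fix c :: bool
    show "(\<lambda>\<omega>. G c (\<omega> []) (\<lambda>u. \<omega> (c # u))) \<in> borel_measurable tree_space"
      using measurable_compose[OF measurable_Pair[OF root_meas[OF measurable_ident_sets[OF refl]] shift_meas[OF measurable_ident_sets[OF refl]]] Gm[of c]]
      by simp
  qed
  also have "\<dots> = (\<Sum>c\<in>UNIV. \<integral>\<^sup>+l. (\<integral>\<^sup>+\<omega>'. G c l \<omega>' \<partial>tree_space) \<partial>label_measure)"
    by (intro sum.cong refl decomp Gm)
  finally show ?thesis unfolding G_def .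
qed

lemma bound:
  fixes \<phi> :: "nat \<Rightarrow> 'st \<Rightarrow> ennreal" and S :: "nat \<Rightarrow> 'st set" and \<rho> :: "nat \<Rightarrow> ennreal"
  assumes \<phi>: "\<And>j. \<phi> j \<in> borel_measurable borel"
    and inv: "\<And>j s. s \<in> S j \<Longrightarrow> AE l in label_measure. \<forall>c. stp j l s c \<in> S (Suc j)"
    and sup: "\<And>j s. s \<in> S j \<Longrightarrow> (\<Sum>c\<in>UNIV. \<integral>\<^sup>+l. \<phi> (Suc j) (stp j l s c) \<partial>label_measure) \<le> \<rho> j * \<phi> j s"
  shows "s \<in> S d \<Longrightarrow> (\<integral>\<^sup>+\<omega>. (\<Sum>w\<in>{w. length w = n}. \<phi> (d + n) (gw stp \<omega> d s w)) \<partial>tree_space) \<le> (\<Prod>i<n. \<rho> (d + i)) * \<phi> d s"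
proof (induction n arbitrary: d s)
  case 0
  interpret T: prob_space tree_space by (rule prob_tree)
  show ?case by (simp add: gen_0 T.emeasure_space_1)
next
  case (Suc n)
  have "(\<integral>\<^sup>+\<omega>. (\<Sum>w\<in>{w. length w = Suc n}. \<phi> (d + Suc n) (gw stp \<omega> d s w)) \<partial>tree_space)
    = (\<Sum>c\<in>UNIV. \<integral>\<^sup>+l. (\<integral>\<^sup>+\<omega>. (\<Sum>w\<in>{w. length w = n}. \<phi> (Suc d + n) (gw stp \<omega> (Suc d) (stp d l s c) w)) \<partial>tree_space) \<partial>label_measure)"
    using root_rec[OF \<phi>] by simp
  also have "\<dots> \<le> (\<Sum>c\<in>UNIV. \<integral>\<^sup>+l. (\<Prod>i<n. \<rho> (Suc d + i)) * \<phi> (Suc d) (stp d l s c) \<partial>label_measure)"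
  proof (intro sum_mono nn_integral_mono_AE)
    fix c
    show "AE l in label_measure. (\<integral>\<^sup>+\<omega>. (\<Sum>w\<in>{w. length w = n}. \<phi> (Suc d + n) (gw stp \<omega> (Suc d) (stp d l s c) w)) \<partial>tree_space)
       \<le> (\<Prod>i<n. \<rho> (Suc d + i)) * \<phi> (Suc d) (stp d l s c)"
      using inv[OF Suc.prems] by eventually_elim (rule Suc.IH, blast)
  qed
  also have "\<dots> = (\<Prod>i<n. \<rho> (Suc d + i)) * (\<Sum>c\<in>UNIV. \<integral>\<^sup>+l. \<phi> (Suc d) (stp d l s c) \<partial>label_measure)"
  proof -
    have m: "(\<lambda>l. \<phi> (Suc d) (stp d l s c)) \<in> borel_measurable label_measure" for c
    proof -
      have "(\<lambda>l::lab. stp d l s c) \<in> measurable label_measure borel"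
        using measurable_compose[OF measurable_Pair[OF measurable_ident_sets[OF refl] measurable_const[of s]] stp_meas[of d c]]
        by simp
      then show ?thesis using \<phi> by measurable
    qed
    show ?thesis
      by (simp add: nn_integral_cmult[OF m] sum_distrib_left)
  qed
  also have "\<dots> \<le> (\<Prod>i<n. \<rho> (Suc d + i)) * (\<rho> d * \<phi> d s)"
    by (intro mult_left_mono sup[OF Suc.prems]) simp
  also have "\<dots> = (\<Prod>i<Suc n. \<rho> (d + i)) * \<phi> d s"
    by (simp only: prod.lessThan_Suc_shift) (simp add: mult_ac)
  finally show ?case .
qed

end

definition stepl :: "lab \<Rightarrow> real \<times> real \<times> real \<Rightarrow> bool \<Rightarrow> real \<times> real \<times> real" where
  "stepl l s c =
    (let B = fst s; H = fst (snd s); T = snd (snd s);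
         us = fst l; ud = fst (snd l); e = snd (snd l);
         X = - ln B; Y = - ln H; D = (ud \<le> Pf X Y);
         fr = (if c then 1 - us else us)
     in (if D then fr * B else B, if D then H else fr * H, T + e / Rf X Y))"

lemma step_stepl: "step \<omega> v s c = stepl (\<omega> v) s c"
  unfolding step_def stepl_def
  by (cases s; cases "\<omega> v") (simp add: Let_def)

fun aw :: "(nat \<Rightarrow> lab \<Rightarrow> 'st \<Rightarrow> bool \<Rightarrow> 'st) \<Rightarrow> sample \<Rightarrow> vertex \<Rightarrow> 'st \<Rightarrow> bool list \<Rightarrow> 'st" where
  "aw stp \<omega> v s [] = s"
| "aw stp \<omega> v s (c # cs) = aw stp \<omega> (v @ [c]) (stp (length v) (\<omega> v) s c) cs"

lemma aw_gw: "aw stp \<omega> v s w = gw stp (\<lambda>u. \<omega> (v @ u)) (length v) s w"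
  by (induction w arbitrary: v s) auto

lemma aw_snoc: "aw stp \<omega> v s (w @ [c]) = stp (length (v @ w)) (\<omega> (v @ w)) (aw stp \<omega> v s w) c"
  by (induction w arbitrary: v s) auto

lemma walk_aw: "walk \<omega> v s w = aw (\<lambda>_. stepl) \<omega> v s w"
  by (induction w arbitrary: v s) (auto simp: step_stepl)

lemma state_gw: "state \<omega> w = gw (\<lambda>_. stepl) \<omega> 0 (1, 1, 0) w"
  unfolding state_def walk_aw aw_gw by simp

lemma state_snoc: "state \<omega> (w @ [c]) = stepl (\<omega> w) (state \<omega> w) c"
  unfolding state_def walk_aw aw_snoc by simp

lemma Pf_meas[measurable]:
  assumes [measurable]: "f \<in> borel_measurable M" "g \<in> borel_measurable M"
  shows "(\<lambda>x. Pf (f x) (g x)) \<in> borel_measurable M"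
  unfolding Pf_def by measurable

lemma Rf_meas[measurable]:
  assumes [measurable]: "f \<in> borel_measurable M" "g \<in> borel_measurable M"
  shows "(\<lambda>x. Rf (f x) (g x)) \<in> borel_measurable M"
  unfolding Rf_def by measurable

lemma stepl_meas:
  "(\<lambda>p. stepl (fst p) (snd p) c) \<in> measurable (label_measure \<Otimes>\<^sub>M (borel :: (real \<times> real \<times> real) measure)) borel"
proof -
  let ?R = "(borel::real measure) \<Otimes>\<^sub>M ((borel::real measure) \<Otimes>\<^sub>M (borel::real measure))"
  have "(\<lambda>p. stepl (fst p) (snd p) c) \<in> measurable (?R \<Otimes>\<^sub>M ?R) ?R"
    unfolding stepl_def Let_def by measurable
  moreover have e: "sets ?R = sets (borel :: (real \<times> real \<times> real) measure)"
    by (simp only: borel_prod)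
  moreover have l: "sets label_measure = sets ?R"
    unfolding label_measure_def
    by (intro sets_pair_measure_cong) auto
  ultimately show ?thesis
    by (subst measurable_cong_sets[OF sets_pair_measure_cong[OF l e[symmetric]] e[symmetric]])
qed

interpretation ST: gwalk "\<lambda>_. stepl"
  by unfold_locales (rule stepl_meas)

abbreviation U :: "real measure" where "U \<equiv> uniform_measure lborel {0<..<1::real}"
abbreviation Ex :: "real measure" where "Ex \<equiv> density lborel (exponential_density 1)"

lemma prob_U: "prob_space U" by (intro prob_space_uniform_measure) auto
lemma prob_Ex: "prob_space Ex" by (intro prob_space_exponential_density) auto

interpretation PU: prob_space U by (rule prob_U)
interpretation PE: prob_space Ex by (rule prob_Ex)

lemma U_int:
  assumes [measurable]: "f \<in> borel_measurable borel"
  shows "(\<integral>\<^sup>+u. f u \<partial>U) = (\<integral>\<^sup>+u. f u * indicator {0<..<1} u \<partial>lborel)"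
  by (subst nn_integral_uniform_measure) (auto simp: divide_ennreal_def)

lemma U_powr:
  assumes a: "a > -1"
  shows "(\<integral>\<^sup>+u. ennreal (u powr a) \<partial>U) \<le> ennreal (1 / (a + 1))"
proof -
  have "(\<integral>\<^sup>+u. ennreal (u powr a) \<partial>U) = (\<integral>\<^sup>+u. ennreal (u powr a) * indicator {0<..<1} u \<partial>lborel)"
    by (rule U_int) measurable
  also have "\<dots> \<le> (\<integral>\<^sup>+u. ennreal (if u \<in> {0..1} then u powr a else 0) \<partial>lborel)"
    by (intro nn_integral_mono) (auto split: split_indicator)
  also have "\<dots> = ennreal (1 / (a + 1))"
  proof -
    have "((\<lambda>x. if x \<in> {0..1} then x powr a else 0) has_integral (1 powr (a+1) / (a+1))) UNIV"
      using has_integral_powr_from_0[OF a, of 1] by (subst has_integral_restrict_UNIV) simp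
    then have "integral\<^sup>N lborel (\<lambda>x. if x \<in> {0..1} then x powr a else 0) = 1 powr (a+1) / (a+1)"
      by (intro nn_integral_has_integral_lborel) auto
    then show ?thesis by (simp add: if_distrib)
  qed
  finally show ?thesis .
qed

lemma U_flip:
  assumes [measurable]: "g \<in> borel_measurable borel"
  shows "(\<integral>\<^sup>+u. g (1 - u) \<partial>U) = (\<integral>\<^sup>+u. g u \<partial>U)"
proof -
  have "(\<integral>\<^sup>+u. g u \<partial>U) = (\<integral>\<^sup>+u. g u * indicator {0<..<1} u \<partial>lborel)"
    by (rule U_int) simp
  also have "\<dots> = ennreal \<bar>-1\<bar> * (\<integral>\<^sup>+u. g (1 + (-1) * u) * indicator {0<..<1} (1 + (-1) * u) \<partial>lborel)"
    by (rule nn_integral_real_affine[where f="\<lambda>u. g u * indicator {0<..<1} u" and c="-1" and t=1]) auto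
  also have "\<dots> = (\<integral>\<^sup>+u. g (1 - u) * indicator {0<..<1} u \<partial>lborel)"
    by (simp, intro nn_integral_cong) (auto split: split_indicator)
  also have "\<dots> = (\<integral>\<^sup>+u. g (1 - u) \<partial>U)"
    by (rule U_int[symmetric]) simp
  finally show ?thesis ..
qed

lemma U_Ioi:
  assumes "0 \<le> t" "t \<le> 1"
  shows "emeasure U {t<..} = ennreal (1 - t)"
proof -
  have "{0<..<1} \<inter> {t<..} = {t<..<(1::real)}" using assms by auto
  then show ?thesis using assms by (simp add: divide_ennreal_def)
qed

lemma U_Iic:
  assumes "0 \<le> t" "t \<le> 1"
  shows "emeasure U {..t} = ennreal t"
proof (cases "t = 1")
  case True
  have "{0<..<1} \<inter> {..t} = {0<..<1}" using True by auto
  then show ?thesis using True by (simp add: divide_ennreal_def)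
next
  case False
  have "{0<..<1} \<inter> {..t} = {0<..t}" using assms False by auto
  then show ?thesis using assms by (simp add: divide_ennreal_def)
qed

lemma Ex_exp:
  assumes b: "b < 1"
  shows "(\<integral>\<^sup>+x. ennreal (exp (b * x)) \<partial>Ex) = ennreal (1 / (1 - b))"
proof -
  have "(\<integral>\<^sup>+x. ennreal (exp (b * x)) \<partial>Ex) = (\<integral>\<^sup>+x. ennreal (exponential_density 1 x) * ennreal (exp (b * x)) \<partial>lborel)"
    by (subst nn_integral_density) auto
  also have "\<dots> = (\<integral>\<^sup>+x. ennreal (if x \<in> {0..} then exp (- (1 - b) * x) else 0) \<partial>lborel)"
    by (intro nn_integral_cong) (auto simp: exponential_density_def ennreal_mult'[symmetric] exp_add[symmetric] algebra_simps)
  also have "\<dots> = ennreal (exp (- (1 - b) * 0) / (1 - b))"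
  proof (intro nn_integral_has_integral_lborel)
    show "((\<lambda>x. if x \<in> {0..} then exp (- (1 - b) * x) else 0) has_integral exp (- (1 - b) * 0) / (1 - b)) UNIV"
      using has_integral_exp_minus_to_infinity[of "1 - b" 0] b
      by (subst has_integral_restrict_UNIV) simp
  qed auto
  finally show ?thesis by simp
qed

lemma L_int:
  assumes f[measurable]: "f \<in> borel_measurable label_measure"
  shows "(\<integral>\<^sup>+l. f l \<partial>label_measure) = (\<integral>\<^sup>+us. \<integral>\<^sup>+ud. \<integral>\<^sup>+e. f (us, ud, e) \<partial>Ex \<partial>U \<partial>U)"
proof -
  have sf1: "sigma_finite_measure (U \<Otimes>\<^sub>M Ex)"
    by (intro prob_space_imp_sigma_finite prob_space_pair prob_U prob_Ex)
  have sf2: "sigma_finite_measure Ex"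
    by (intro prob_space_imp_sigma_finite prob_Ex)
  have f': "f \<in> borel_measurable (U \<Otimes>\<^sub>M (U \<Otimes>\<^sub>M Ex))" using f by (simp add: label_measure_def)
  have "(\<integral>\<^sup>+l. f l \<partial>label_measure) = (\<integral>\<^sup>+us. \<integral>\<^sup>+p. f (us, p) \<partial>(U \<Otimes>\<^sub>M Ex) \<partial>U)"
    unfolding label_measure_def by (rule sigma_finite_measure.nn_integral_fst[OF sf1, symmetric]) (use f' in simp)
  also have "\<dots> = (\<integral>\<^sup>+us. \<integral>\<^sup>+ud. \<integral>\<^sup>+e. f (us, ud, e) \<partial>Ex \<partial>U \<partial>U)"
  proof (intro nn_integral_cong)
    fix us
    have "(\<lambda>p. f (us, p)) \<in> borel_measurable (U \<Otimes>\<^sub>M Ex)"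
      using measurable_Pair2[OF f', of us] by simp
    then show "(\<integral>\<^sup>+p. f (us, p) \<partial>(U \<Otimes>\<^sub>M Ex)) = (\<integral>\<^sup>+ud. \<integral>\<^sup>+e. f (us, ud, e) \<partial>Ex \<partial>U)"
      by (rule sigma_finite_measure.nn_integral_fst[OF sf2, symmetric, simplified])
  qed
  finally show ?thesis .
qed

lemma Pf_range:
  assumes "0 \<le> x" "0 \<le> y"
  shows "0 \<le> Pf x y" "Pf x y \<le> 1"
  using assms by (auto simp: Pf_def field_simps)

lemma stepl_eq:
  "stepl (us, ud, e) (B, H, T) c =
    (if ud \<le> Pf (- ln B) (- ln H)
     then ((if c then 1 - us else us) * B, H, T + e / Rf (- ln B) (- ln H))
     else (B, (if c then 1 - us else us) * H, T + e / Rf (- ln B) (- ln H)))"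
  unfolding stepl_def Let_def by simp

lemma kernel:
  fixes F :: "real \<times> real \<times> real \<Rightarrow> ennreal"
  assumes B: "0 < B" "B \<le> 1" and H: "0 < H" "H \<le> 1"
    and F[measurable]: "F \<in> borel_measurable borel"
  shows "(\<integral>\<^sup>+l. F (stepl l (B, H, T) c) \<partial>label_measure) =
    (\<integral>\<^sup>+us. (ennreal (Pf (- ln B) (- ln H)) * (\<integral>\<^sup>+e. F ((if c then 1 - us else us) * B, H, T + e / Rf (- ln B) (- ln H)) \<partial>Ex)
            + ennreal (1 - Pf (- ln B) (- ln H)) * (\<integral>\<^sup>+e. F (B, (if c then 1 - us else us) * H, T + e / Rf (- ln B) (- ln H)) \<partial>Ex)) \<partial>U)"
proof -
  define p where "p = Pf (- ln B) (- ln H)"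
  define R where "R = Rf (- ln B) (- ln H)"
  have p: "0 \<le> p" "p \<le> 1" unfolding p_def using B H by (auto intro!: Pf_range)
  have sm: "(\<lambda>l. stepl l (B, H, T) c) \<in> measurable label_measure borel"
    using measurable_compose[OF measurable_Pair[OF measurable_ident_sets[OF refl] measurable_const[of "(B, H, T)"]] stepl_meas[of c]]
    by simp
  have Fm: "(\<lambda>l. F (stepl l (B, H, T) c)) \<in> borel_measurable label_measure"
    using measurable_compose[OF sm F] .
  have "(\<integral>\<^sup>+l. F (stepl l (B, H, T) c) \<partial>label_measure) = (\<integral>\<^sup>+us. \<integral>\<^sup>+ud. \<integral>\<^sup>+e. F (stepl (us, ud, e) (B, H, T) c) \<partial>Ex \<partial>U \<partial>U)"
    by (rule L_int[OF Fm])
  also have "\<dots> = (\<integral>\<^sup>+us. (ennreal p * (\<integral>\<^sup>+e. F ((if c then 1 - us else us) * B, H, T + e / R) \<partial>Ex)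
            + ennreal (1 - p) * (\<integral>\<^sup>+e. F (B, (if c then 1 - us else us) * H, T + e / R) \<partial>Ex)) \<partial>U)"
  proof (intro nn_integral_cong)
    fix us :: real
    define A1 where "A1 = (\<integral>\<^sup>+e. F ((if c then 1 - us else us) * B, H, T + e / R) \<partial>Ex)"
    define A2 where "A2 = (\<integral>\<^sup>+e. F (B, (if c then 1 - us else us) * H, T + e / R) \<partial>Ex)"
    have "(\<integral>\<^sup>+ud. \<integral>\<^sup>+e. F (stepl (us, ud, e) (B, H, T) c) \<partial>Ex \<partial>U) = (\<integral>\<^sup>+ud. indicator {..p} ud * A1 + indicator {p<..} ud * A2 \<partial>U)"
      by (intro nn_integral_cong) (auto simp: stepl_eq A1_def A2_def p_def[symmetric] R_def[symmetric] split: split_indicator)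
    also have "\<dots> = (\<integral>\<^sup>+ud. indicator {..p} ud * A1 \<partial>U) + (\<integral>\<^sup>+ud. indicator {p<..} ud * A2 \<partial>U)"
      by (rule nn_integral_add) auto
    also have "\<dots> = ennreal p * A1 + ennreal (1 - p) * A2"
    proof -
      have h1: "(\<integral>\<^sup>+ud. A1 * indicator {..p} ud \<partial>U) = A1 * emeasure U {..p}"
        by (rule nn_integral_cmult_indicator, simp)
      have h2: "(\<integral>\<^sup>+ud. A2 * indicator {p<..} ud \<partial>U) = A2 * emeasure U {p<..}"
        by (rule nn_integral_cmult_indicator, simp)
      show ?thesis
        by (simp only: mult.commute[of "indicator _ _"] h1 h2 U_Iic[OF p] U_Ioi[OF p]) (simp add: mult.commute)
    qed
    finally show "(\<integral>\<^sup>+ud. \<integral>\<^sup>+e. F (stepl (us, ud, e) (B, H, T) c) \<partial>Ex \<partial>U) =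
         ennreal p * (\<integral>\<^sup>+e. F ((if c then 1 - us else us) * B, H, T + e / R) \<partial>Ex) + ennreal (1 - p) * (\<integral>\<^sup>+e. F (B, (if c then 1 - us else us) * H, T + e / R) \<partial>Ex)"
      unfolding A1_def A2_def .
  qed
  finally show ?thesis unfolding p_def R_def .
qed

lemma AE_U: "AE u in U. 0 < u \<and> u < 1"
  by (rule AE_uniform_measureI) auto

lemma AE_Ex: "AE e in Ex. 0 \<le> e"
  by (subst AE_density) (auto simp: exponential_density_def intro!: AE_I2 split: if_splits)

lemma AE_L: "AE l in label_measure. 0 < fst l \<and> fst l < 1 \<and> 0 \<le> snd (snd l)"
proof -
  interpret P2: pair_sigma_finite U Ex by unfold_locales
  interpret P1: pair_sigma_finite U "U \<Otimes>\<^sub>M Ex" by unfold_locales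
  have m1: "{p \<in> space (U \<Otimes>\<^sub>M Ex). 0 \<le> snd p} \<in> sets (U \<Otimes>\<^sub>M Ex)" by measurable
  have a1: "AE p in U \<Otimes>\<^sub>M Ex. 0 \<le> snd p"
    by (rule P2.AE_pair_measure[OF m1]) (auto intro!: AE_I2 simp: AE_Ex)
  have m2: "{l \<in> space (U \<Otimes>\<^sub>M (U \<Otimes>\<^sub>M Ex)). 0 < fst l \<and> fst l < 1 \<and> 0 \<le> snd (snd l)} \<in> sets (U \<Otimes>\<^sub>M (U \<Otimes>\<^sub>M Ex))"
    by measurable
  show ?thesis unfolding label_measure_def
  proof (rule P1.AE_pair_measure[OF m2])
    show "AE x in U. AE y in U \<Otimes>\<^sub>M Ex. 0 < fst (x, y) \<and> fst (x, y) < 1 \<and> 0 \<le> snd (snd (x, y))"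
      using AE_U
    proof eventually_elim
      case (elim x)
      show ?case using a1 by eventually_elim (use elim in auto)
    qed
  qed
qed

lemma Rf_ge1: assumes "0 \<le> x" "0 \<le> y" shows "1 \<le> Rf x y"
  using assms by (auto simp: Rf_def field_simps le_max_iff_disj)

lemma kernel_bound:
  fixes F :: "real \<times> real \<times> real \<Rightarrow> ennreal" and G1 G2 :: "real \<Rightarrow> real \<Rightarrow> ennreal"
  assumes B: "0 < B" "B \<le> 1" and H: "0 < H" "H \<le> 1"
    and F[measurable]: "F \<in> borel_measurable borel"
    and g1: "\<And>fr e. 0 < fr \<Longrightarrow> fr < 1 \<Longrightarrow> 0 \<le> e \<Longrightarrow> F (fr * B, H, T + e / Rf (- ln B) (- ln H)) \<le> G1 fr e"
    and g2: "\<And>fr e. 0 < fr \<Longrightarrow> fr < 1 \<Longrightarrow> 0 \<le> e \<Longrightarrow> F (B, fr * H, T + e / Rf (- ln B) (- ln H)) \<le> G2 fr e"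
  shows "(\<integral>\<^sup>+l. F (stepl l (B, H, T) c) \<partial>label_measure) \<le>
    (\<integral>\<^sup>+us. (ennreal (Pf (- ln B) (- ln H)) * (\<integral>\<^sup>+e. G1 (if c then 1 - us else us) e \<partial>Ex)
            + ennreal (1 - Pf (- ln B) (- ln H)) * (\<integral>\<^sup>+e. G2 (if c then 1 - us else us) e \<partial>Ex)) \<partial>U)"
  unfolding kernel[OF B H F]
proof (intro nn_integral_mono_AE)
  show "AE us in U. ennreal (Pf (- ln B) (- ln H)) * (\<integral>\<^sup>+e. F ((if c then 1 - us else us) * B, H, T + e / Rf (- ln B) (- ln H)) \<partial>Ex) +
      ennreal (1 - Pf (- ln B) (- ln H)) * (\<integral>\<^sup>+e. F (B, (if c then 1 - us else us) * H, T + e / Rf (- ln B) (- ln H)) \<partial>Ex)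
    \<le> ennreal (Pf (- ln B) (- ln H)) * (\<integral>\<^sup>+e. G1 (if c then 1 - us else us) e \<partial>Ex) +
      ennreal (1 - Pf (- ln B) (- ln H)) * (\<integral>\<^sup>+e. G2 (if c then 1 - us else us) e \<partial>Ex)"
    using AE_U
  proof eventually_elim
    case (elim us)
    define fr where "fr = (if c then 1 - us else us)"
    have fr: "0 < fr" "fr < 1" using elim by (auto simp: fr_def)
    show ?case unfolding fr_def[symmetric]
      by (intro add_mono mult_left_mono nn_integral_mono_AE)
         (auto intro: AE_mp[OF AE_Ex] g1 g2 fr)
  qed
qed

definition SU :: "(real \<times> real \<times> real) set" where
  "SU = {s. 0 < fst s \<and> fst s \<le> 1 \<and> 0 < fst (snd s) \<and> fst (snd s) \<le> 1 \<and> 0 \<le> snd (snd s)}"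

definition phiU :: "real \<times> real \<times> real \<Rightarrow> ennreal" where
  "phiU s = (if 0 < fst s \<and> fst s \<le> 1 \<and> 0 < fst (snd s) \<and> fst (snd s) \<le> 1 \<and> 0 \<le> snd (snd s)
     then ennreal ((fst s * fst (snd s)) powr (-1/2) * exp (snd (snd s) / 2)) else \<infinity>)"

lemma phiU_meas[measurable]: "phiU \<in> borel_measurable borel"
proof -
  let ?R = "(borel::real measure) \<Otimes>\<^sub>M ((borel::real measure) \<Otimes>\<^sub>M (borel::real measure))"
  have "phiU \<in> borel_measurable ?R" unfolding phiU_def by measurable
  moreover have e: "sets ?R = sets (borel :: (real \<times> real \<times> real) measure)"
    by (simp only: borel_prod)
  ultimately show ?thesis by (subst measurable_cong_sets[OF e[symmetric] refl])
qed

lemma stepl_SU: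
  assumes s: "s \<in> SU" and l: "0 < fst l" "fst l < 1" "0 \<le> snd (snd l)"
  shows "stepl l s c \<in> SU"
proof -
  obtain B H T where sd: "s = (B, H, T)" by (cases s)
  obtain us ud e where ld: "l = (us, ud, e)" by (cases l)
  have B: "0 < B" "B \<le> 1" and H: "0 < H" "H \<le> 1" and T: "0 \<le> T" using s by (auto simp: SU_def sd)
  have R: "1 \<le> Rf (- ln B) (- ln H)" using B H by (intro Rf_ge1) auto
  have e: "0 \<le> e / Rf (- ln B) (- ln H)" using R l by (auto simp: ld)
  have fr: "0 < (if c then 1 - us else us)" "(if c then 1 - us else us) < 1" using l by (auto simp: ld)
  have "0 < (if c then 1 - us else us) * B" "(if c then 1 - us else us) * B \<le> 1"
    "0 < (if c then 1 - us else us) * H" "(if c then 1 - us else us) * H \<le> 1"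
    using fr B H by (auto intro: mult_le_one)
  then show ?thesis using B H T e unfolding sd ld stepl_eq SU_def by auto
qed

lemma inv_SU: "s \<in> SU \<Longrightarrow> AE l in label_measure. \<forall>c. stepl l s c \<in> SU"
  using AE_L by eventually_elim (auto intro: stepl_SU)

lemma sup_U:
  assumes s: "s \<in> SU"
  shows "(\<Sum>c\<in>UNIV. \<integral>\<^sup>+l. phiU (stepl l s c) \<partial>label_measure) \<le> 8 * phiU s"
proof -
  obtain B H T where sd: "s = (B, H, T)" by (cases s)
  have B: "0 < B" "B \<le> 1" and H: "0 < H" "H \<le> 1" and T: "0 \<le> T" using s by (auto simp: SU_def sd)
  define R where "R = Rf (- ln B) (- ln H)"
  have R: "1 \<le> R" unfolding R_def using B H by (intro Rf_ge1) auto
  define \<Phi> where "\<Phi> = (B * H) powr (-1/2) * exp (T / 2)"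
  have \<Phi>0: "0 \<le> \<Phi>" unfolding \<Phi>_def by simp
  have \<Phi>: "phiU s = ennreal \<Phi>" using B H T by (simp add: phiU_def sd \<Phi>_def)
  define p where "p = Pf (- ln B) (- ln H)"
  have p: "0 \<le> p" "p \<le> 1" unfolding p_def using B H by (auto intro!: Pf_range)
  define G where "G fr e = ennreal (fr powr (-1/2) * \<Phi>) * ennreal (exp (e / 2))" for fr e :: real
  have key: "ennreal ((fr * B * H) powr (-1/2) * exp ((T + e / R) / 2)) \<le> G fr e"
    if fr: "0 < fr" "fr < 1" and e: "0 \<le> e" for fr e
  proof -
    have "e / R \<le> e" using R e by (simp add: divide_le_eq_1 mult_le_cancel_left1 divide_le_eq)
    then have "exp ((T + e / R) / 2) \<le> exp (T / 2) * exp (e / 2)"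
      by (simp add: exp_add[symmetric] add_divide_distrib)
    moreover have "(fr * B * H) powr (-1/2) = fr powr (-1/2) * (B * H) powr (-1/2)"
      using fr B H by (simp add: powr_mult mult.assoc)
    ultimately have "(fr * B * H) powr (-1/2) * exp ((T + e / R) / 2) \<le> fr powr (-1/2) * \<Phi> * exp (e / 2)"
    proof -
      assume a: "exp ((T + e / R) / 2) \<le> exp (T / 2) * exp (e / 2)"
        "(fr * B * H) powr (-1/2) = fr powr (-1/2) * (B * H) powr (-1/2)"
      have "fr powr (-1/2) * (B * H) powr (-1/2) * exp ((T + e / R) / 2) \<le> fr powr (-1/2) * (B * H) powr (-1/2) * (exp (T / 2) * exp (e / 2))"
        by (rule mult_left_mono[OF a(1)]) auto
      then show ?thesis unfolding a(2) \<Phi>_def by (simp add: mult_ac)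
    qed
    then show ?thesis unfolding G_def
      by (subst ennreal_mult''[symmetric]) (auto intro: ennreal_leI)
  qed
  have int_e: "(\<integral>\<^sup>+e. G fr e \<partial>Ex) = ennreal (fr powr (-1/2) * \<Phi>) * 2" for fr
  proof -
    have "(\<integral>\<^sup>+e. G fr e \<partial>Ex) = ennreal (fr powr (-1/2) * \<Phi>) * (\<integral>\<^sup>+e. ennreal (exp ((1/2) * e)) \<partial>Ex)"
      unfolding G_def by (subst nn_integral_cmult) (auto simp: mult.commute)
    also have "\<dots> = ennreal (fr powr (-1/2) * \<Phi>) * 2"
      by (subst Ex_exp) auto
    finally show ?thesis .
  qed
  have one_c: "(\<integral>\<^sup>+l. phiU (stepl l s c) \<partial>label_measure) \<le> 4 * phiU s" for c
  proof -
    have "(\<integral>\<^sup>+l. phiU (stepl l s c) \<partial>label_measure) \<le>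
      (\<integral>\<^sup>+us. (ennreal p * (\<integral>\<^sup>+e. G (if c then 1 - us else us) e \<partial>Ex)
            + ennreal (1 - p) * (\<integral>\<^sup>+e. G (if c then 1 - us else us) e \<partial>Ex)) \<partial>U)"
      unfolding sd p_def
    proof (rule kernel_bound[OF B H phiU_meas])
      fix fr e :: real assume fr: "0 < fr" "fr < 1" and e: "0 \<le> e"
      have e': "0 \<le> e / R" using e R by simp
      have "0 < fr * B" "fr * B \<le> 1" "0 < fr * H" "fr * H \<le> 1"
        using fr B H by (auto intro: mult_le_one)
      then show "phiU (fr * B, H, T + e / Rf (- ln B) (- ln H)) \<le> G fr e"
        "phiU (B, fr * H, T + e / Rf (- ln B) (- ln H)) \<le> G fr e"
        using key[OF fr e] B H T e' unfolding R_def[symmetric]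
        by (auto simp: phiU_def mult.commute mult.left_commute)
    qed
    also have "\<dots> = (\<integral>\<^sup>+us. ennreal ((if c then 1 - us else us) powr (-1/2) * \<Phi>) * 2 \<partial>U)"
    proof (intro nn_integral_cong)
      fix us
      have "ennreal p + ennreal (1 - p) = 1" using p by (simp add: ennreal_plus[symmetric] del: ennreal_plus)
      then show "ennreal p * (\<integral>\<^sup>+e. G (if c then 1 - us else us) e \<partial>Ex) + ennreal (1 - p) * (\<integral>\<^sup>+e. G (if c then 1 - us else us) e \<partial>Ex) =
          ennreal ((if c then 1 - us else us) powr (-1/2) * \<Phi>) * 2"
        unfolding int_e by (metis distrib_right mult_1)
    qed
    also have "\<dots> = 2 * ennreal \<Phi> * (\<integral>\<^sup>+us. ennreal ((if c then 1 - us else us) powr (-1/2)) \<partial>U)"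
      by (subst nn_integral_cmult[symmetric]) (auto simp: ennreal_mult[OF \<Phi>0] mult_ac intro!: nn_integral_cong)
    also have "(\<integral>\<^sup>+us. ennreal ((if c then 1 - us else us) powr (-1/2)) \<partial>U) = (\<integral>\<^sup>+us. ennreal (us powr (-1/2)) \<partial>U)"
    proof (cases c)
      case True
      then show ?thesis using U_flip[of "\<lambda>u. ennreal (u powr (-1/2))"] by simp
    qed simp
    also have "2 * ennreal \<Phi> * \<dots> \<le> 2 * ennreal \<Phi> * ennreal 2"
      by (intro mult_left_mono order.trans[OF U_powr]) auto
    finally show ?thesis unfolding \<Phi>
      by (simp add: ennreal_mult'[symmetric] mult_ac)
  qed
  have "(\<Sum>c\<in>UNIV. \<integral>\<^sup>+l. phiU (stepl l s c) \<partial>label_measure) \<le> (\<Sum>c\<in>(UNIV::bool set). 4 * phiU s)"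
    by (intro sum_mono one_c)
  also have "\<dots> = 8 * phiU s" by simp
  finally show ?thesis .
qed

definition V :: "real \<Rightarrow> real \<Rightarrow> real \<Rightarrow> real \<Rightarrow> real" where
  "V \<theta> K a b = \<theta> * a + K * ((a + 1) * (ln (a + b + 2) - ln (a + 1)))"

lemma ln_ratio_lower:
  fixes t c :: real
  assumes "0 < t" "0 \<le> c"
  shows "c / (t + c) \<le> ln (t + c) - ln t"
proof -
  have "ln (t / (t + c)) \<le> t / (t + c) - 1" using assms by (intro ln_le_minus_one) auto
  moreover have "ln (t / (t + c)) = ln t - ln (t + c)" using assms by (simp add: ln_div)
  moreover have "t / (t + c) - 1 = - (c / (t + c))" using assms by (simp add: field_simps)
  ultimately show ?thesis by linarith
qed

lemma g_mono:
  fixes t t' c :: real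
  assumes "1 \<le> t" "t \<le> t'" "0 \<le> c"
  shows "t * (ln (t + c) - ln t) \<le> t' * (ln (t' + c) - ln t')"
proof (rule deriv_nonneg_imp_mono[where g = "\<lambda>t. t * (ln (t + c) - ln t)" and g' = "\<lambda>t. (ln (t + c) - ln t) - c / (t + c)"])
  fix x assume x: "x \<in> {t..t'}"
  then have x0: "0 < x" using assms by auto
  show "((\<lambda>t. t * (ln (t + c) - ln t)) has_real_derivative (ln (x + c) - ln x) - c / (x + c)) (at x)"
  proof -
    have "((\<lambda>t. t * (ln (t + c) - ln t)) has_real_derivative 1 * (ln (x + c) - ln x) + x * (1 / (x + c) - 1 / x)) (at x)"
      using x0 assms by (auto intro!: derivative_eq_intros)
    moreover have "1 * (ln (x + c) - ln x) + x * (1 / (x + c) - 1 / x) = (ln (x + c) - ln x) - c / (x + c)"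
    proof -
      have "0 < x + c" using x0 assms by simp
      then have "x * (x + c) \<noteq> 0" "x + c \<noteq> 0" using x0 by auto
      then show ?thesis using x0 by (simp add: field_simps)
    qed
    ultimately show ?thesis by simp
  qed
  show "0 \<le> (ln (x + c) - ln x) - c / (x + c)" using ln_ratio_lower[OF x0 assms(3)] by simp
qed (use assms in auto)

lemma V_mono_a:
  fixes a b E K \<delta> \<theta> b' :: real
  assumes "0 \<le> a" "0 \<le> b" "0 \<le> E" "0 \<le> K"
  shows "V \<theta> K a b + \<theta> * E \<le> V \<theta> K (a + E) b"
proof -
  have "(a + 1) * (ln ((a + 1) + (b + 1)) - ln (a + 1)) \<le> (a + E + 1) * (ln ((a + E + 1) + (b + 1)) - ln (a + E + 1))"
    using assms by (intro g_mono) auto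
  then have "K * ((a + 1) * (ln (a + b + 2) - ln (a + 1))) \<le> K * ((a + E + 1) * (ln (a + E + b + 2) - ln (a + E + 1)))"
    using assms by (intro mult_left_mono) (auto simp: add_ac)
  then show ?thesis unfolding V_def by (simp add: algebra_simps)
qed

lemma V_mono_b:
  fixes a b E K \<delta> \<theta> b' :: real
  assumes "0 \<le> a" "0 \<le> b" "b \<le> b'" "0 \<le> K"
  shows "V \<theta> K a b \<le> V \<theta> K a b'"
proof -
  have "ln (a + b + 2) \<le> ln (a + b' + 2)" using assms by simp
  then have "(a + 1) * (ln (a + b + 2) - ln (a + 1)) \<le> (a + 1) * (ln (a + b' + 2) - ln (a + 1))"
    using assms by (intro mult_left_mono) auto
  then show ?thesis unfolding V_def using assms by (simp add: mult_left_mono)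
qed

lemma V_step_b:
  fixes a b E K \<delta> \<theta> b' :: real
  assumes "0 \<le> a" "0 \<le> b" "0 < \<delta>" "\<delta> \<le> E" "0 \<le> K"
  shows "V \<theta> K a b + K * \<delta> * (a + 1) / (a + b + 2 + \<delta>) \<le> V \<theta> K a (b + E)"
proof -
  have "\<delta> / (a + b + 2 + \<delta>) \<le> ln (a + b + 2 + \<delta>) - ln (a + b + 2)"
    using ln_ratio_lower[of "a + b + 2" \<delta>] assms by simp
  also have "\<dots> \<le> ln (a + (b + E) + 2) - ln (a + b + 2)" using assms by simp
  finally have h: "\<delta> / (a + b + 2 + \<delta>) \<le> ln (a + (b + E) + 2) - ln (a + b + 2)" .
  have "(a + 1) * (\<delta> / (a + b + 2 + \<delta>)) \<le> (a + 1) * (ln (a + (b + E) + 2) - ln (a + b + 2))"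
    using mult_left_mono[OF h, of "a + 1"] assms by simp
  then have "K * ((a + 1) * (\<delta> / (a + b + 2 + \<delta>))) \<le> K * ((a + 1) * (ln (a + (b + E) + 2) - ln (a + b + 2)))"
    by (rule mult_left_mono) (use assms in auto)
  then show ?thesis unfolding V_def by (simp add: algebra_simps)
qed

lemma V_nonneg:
  fixes a b E K \<delta> \<theta> b' :: real
  assumes "0 \<le> a" "0 \<le> b" "0 \<le> K" "0 \<le> \<theta>"
  shows "0 \<le> V \<theta> K a b"
proof -
  have "ln (a + 1) \<le> ln (a + b + 2)" using assms by simp
  then show ?thesis unfolding V_def using assms by (auto intro!: add_nonneg_nonneg mult_nonneg_nonneg)
qed

lemma qlem:
  fixes a b q K \<delta> :: real
  assumes a: "0 \<le> a" and b: "0 \<le> b" and q: "0 \<le> q" "q \<le> 1"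
    and qc: "a < b \<Longrightarrow> q \<le> (a + 1) / (2 * (b + 1))"
    and K: "0 < K" and d: "0 < \<delta>" "\<delta> \<le> 1"
  shows "q * exp (- (K * \<delta> * (a + 1) / (a + b + 2 + \<delta>))) \<le> 3 / (K * \<delta>)"
proof -
  define c where "c = K * \<delta>"
  define u where "u = (a + 1) / (a + b + 2 + \<delta>)"
  have c: "0 < c" unfolding c_def using K d(1) by simp
  have u0: "0 < u" using a b d by (simp add: u_def)
  have eq: "K * \<delta> * (a + 1) / (a + b + 2 + \<delta>) = c * u" by (simp add: c_def u_def)
  have ue: "u * exp (- (c * u)) \<le> 1 / c"
  proof -
    have "c * u \<le> exp (c * u)" using exp_ge_add_one_self[of "c * u"] by linarith
    then have "c * u * exp (- (c * u)) \<le> 1"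
      by (simp add: exp_minus field_simps)
    then show ?thesis using c by (simp add: field_simps)
  qed
  have main: "q * exp (- (c * u)) \<le> 3 / c"
  proof (cases "a < b")
    case True
    have "q \<le> (3 / 2) * u"
    proof -
      have S: "0 < a + b + 2 + \<delta>" "a + b + 2 + \<delta> \<le> 3 * (b + 1)" using True a b d by auto
      have i: "1 / (2 * (b + 1)) \<le> 3 / (2 * (a + b + 2 + \<delta>))"
        using S b by (simp add: field_simps)
      have "(a + 1) * (1 / (2 * (b + 1))) \<le> (a + 1) * (3 / (2 * (a + b + 2 + \<delta>)))"
        by (rule mult_left_mono[OF i]) (use a in auto)
      then have "(a + 1) / (2 * (b + 1)) \<le> (3 / 2) * u"
        unfolding u_def by (simp add: field_simps)
      then show ?thesis using qc[OF True] by linarith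
    qed
    then have "q * exp (- (c * u)) \<le> (3 / 2) * u * exp (- (c * u))"
      by (intro mult_right_mono) auto
    also have "\<dots> \<le> (3 / 2) * (1 / c)" using ue by simp
    also have "\<dots> \<le> 3 / c" using c by (simp add: field_simps)
    finally show ?thesis .
  next
    case False
    have u3: "1 / 3 \<le> u" unfolding u_def using False a b d by (simp add: field_simps)
    have "q * exp (- (c * u)) \<le> exp (- (c * u))" using q by (simp add: mult_left_le_one_le)
    also have "\<dots> \<le> exp (- (c / 3))" using u3 c by (simp add: mult_left_mono)
    also have "\<dots> \<le> 3 / c"
    proof -
      have "c / 3 \<le> exp (c / 3)" using exp_ge_add_one_self[of "c / 3"] by linarith
      then have "exp (- (c / 3)) * (c / 3) \<le> 1" by (simp add: exp_minus field_simps)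
      then show ?thesis using c by (simp add: field_simps)
    qed
    finally show ?thesis .
  qed
  then show ?thesis unfolding eq c_def .
qed

lemma ind_kernel:
  fixes F :: "real \<times> real \<times> real \<Rightarrow> ennreal"
  assumes B: "0 < B" "B \<le> 1" and H: "0 < H" "H \<le> 1"
    and F[measurable]: "F \<in> borel_measurable borel"
    and \<Phi>: "0 \<le> \<Phi>" and \<alpha>: "0 \<le> \<alpha>" and \<beta>: "0 \<le> \<beta>" and \<delta>: "0 < \<delta>"
    and b1: "\<And>fr e. 0 < fr \<Longrightarrow> fr < 1 \<Longrightarrow> 0 \<le> e \<Longrightarrow> F (fr * B, H, T + e / Rf (- ln B) (- ln H)) \<le> ennreal (\<Phi> * (indicator {exp (- \<delta>)<..} fr + \<alpha>))"
    and b2: "\<And>fr e. 0 < fr \<Longrightarrow> fr < 1 \<Longrightarrow> 0 \<le> e \<Longrightarrow> F (B, fr * H, T + e / Rf (- ln B) (- ln H)) \<le> ennreal (\<Phi> * (indicator {exp (- \<delta>)<..} fr + \<beta>))"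
  shows "(\<integral>\<^sup>+l. F (stepl l (B, H, T) c) \<partial>label_measure) \<le>
    ennreal (\<Phi> * (\<delta> + Pf (- ln B) (- ln H) * \<alpha> + (1 - Pf (- ln B) (- ln H)) * \<beta>))"
proof -
  define p where "p = Pf (- ln B) (- ln H)"
  have p: "0 \<le> p" "p \<le> 1" unfolding p_def using B H by (auto intro!: Pf_range)
  define t where "t = exp (- \<delta>)"
  have t: "0 < t" "t \<le> 1" using \<delta> by (auto simp: t_def)
  have t1: "1 - t \<le> \<delta>" using exp_ge_add_one_self[of "- \<delta>"] by (simp add: t_def)
  define fr where "fr us = (if c then 1 - us else us)" for us :: real
  have "(\<integral>\<^sup>+l. F (stepl l (B, H, T) c) \<partial>label_measure) \<le>
    (\<integral>\<^sup>+us. (ennreal p * (\<integral>\<^sup>+e. ennreal (\<Phi> * (indicator {t<..} (fr us) + \<alpha>)) \<partial>Ex)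
            + ennreal (1 - p) * (\<integral>\<^sup>+e. ennreal (\<Phi> * (indicator {t<..} (fr us) + \<beta>)) \<partial>Ex)) \<partial>U)"
    unfolding p_def t_def fr_def
    by (rule kernel_bound[OF B H F]) (auto intro: b1 b2)
  also have "\<dots> = (\<integral>\<^sup>+us. ennreal \<Phi> * indicator {t<..} (fr us) + ennreal (\<Phi> * (p * \<alpha> + (1 - p) * \<beta>)) \<partial>U)"
  proof (intro nn_integral_cong)
    fix us
    have "ennreal p * ennreal (\<Phi> * (indicator {t<..} (fr us) + \<alpha>)) + ennreal (1 - p) * ennreal (\<Phi> * (indicator {t<..} (fr us) + \<beta>))
        = ennreal (p * (\<Phi> * (indicator {t<..} (fr us) + \<alpha>)) + (1 - p) * (\<Phi> * (indicator {t<..} (fr us) + \<beta>)))"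
      using p \<Phi> \<alpha> \<beta> by (simp add: ennreal_mult ennreal_plus)
    also have "p * (\<Phi> * (indicator {t<..} (fr us) + \<alpha>)) + (1 - p) * (\<Phi> * (indicator {t<..} (fr us) + \<beta>))
        = \<Phi> * indicator {t<..} (fr us) + \<Phi> * (p * \<alpha> + (1 - p) * \<beta>)"
      by (simp add: algebra_simps)
    also have "ennreal \<dots> = ennreal \<Phi> * indicator {t<..} (fr us) + ennreal (\<Phi> * (p * \<alpha> + (1 - p) * \<beta>))"
      using p \<Phi> \<alpha> \<beta> by (subst ennreal_plus) (auto simp: ennreal_mult indicator_def)
    finally have "ennreal p * ennreal (\<Phi> * (indicator {t<..} (fr us) + \<alpha>)) + ennreal (1 - p) * ennreal (\<Phi> * (indicator {t<..} (fr us) + \<beta>)) =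
        ennreal \<Phi> * indicator {t<..} (fr us) + ennreal (\<Phi> * (p * \<alpha> + (1 - p) * \<beta>))" .
    show "ennreal p * (\<integral>\<^sup>+e. ennreal (\<Phi> * (indicator {t<..} (fr us) + \<alpha>)) \<partial>Ex) + ennreal (1 - p) * (\<integral>\<^sup>+e. ennreal (\<Phi> * (indicator {t<..} (fr us) + \<beta>)) \<partial>Ex)
        = ennreal \<Phi> * indicator {t<..} (fr us) + ennreal (\<Phi> * (p * \<alpha> + (1 - p) * \<beta>))"
    proof -
      have "emeasure Ex UNIV = 1" using PE.emeasure_space_1 by simp
      then show ?thesis using \<open>ennreal p * ennreal (\<Phi> * (indicator {t<..} (fr us) + \<alpha>)) + ennreal (1 - p) * ennreal (\<Phi> * (indicator {t<..} (fr us) + \<beta>)) = ennreal \<Phi> * indicator {t<..} (fr us) + ennreal (\<Phi> * (p * \<alpha> + (1 - p) * \<beta>))\<close> by simp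
    qed
  qed
  also have "\<dots> = ennreal \<Phi> * (\<integral>\<^sup>+us. indicator {t<..} (fr us) \<partial>U) + ennreal (\<Phi> * (p * \<alpha> + (1 - p) * \<beta>))"
    unfolding fr_def by (subst nn_integral_add) (auto simp: nn_integral_cmult PU.emeasure_space_1)
  also have "(\<integral>\<^sup>+us. indicator {t<..} (fr us) \<partial>U) = emeasure U {t<..}"
  proof (cases c)
    case True
    then show ?thesis unfolding fr_def
      using U_flip[of "indicator {t<..}"] by simp
  qed (simp add: fr_def)
  also have "emeasure U {t<..} = ennreal (1 - t)" by (rule U_Ioi) (use t in auto)
  also have "ennreal \<Phi> * ennreal (1 - t) + ennreal (\<Phi> * (p * \<alpha> + (1 - p) * \<beta>)) = ennreal (\<Phi> * (1 - t + p * \<alpha> + (1 - p) * \<beta>))"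
  proof -
    have n1: "0 \<le> \<Phi> * (1 - t)" using \<Phi> t by simp
    have n2: "0 \<le> \<Phi> * (p * \<alpha> + (1 - p) * \<beta>)" using \<Phi> p \<alpha> \<beta> by simp
    have "ennreal \<Phi> * ennreal (1 - t) = ennreal (\<Phi> * (1 - t))" using \<Phi> t by (simp add: ennreal_mult)
    then have "ennreal \<Phi> * ennreal (1 - t) + ennreal (\<Phi> * (p * \<alpha> + (1 - p) * \<beta>)) = ennreal (\<Phi> * (1 - t) + \<Phi> * (p * \<alpha> + (1 - p) * \<beta>))"
      using ennreal_plus[OF n1 n2] by simp
    also have "\<Phi> * (1 - t) + \<Phi> * (p * \<alpha> + (1 - p) * \<beta>) = \<Phi> * (1 - t + p * \<alpha> + (1 - p) * \<beta>)"
      by (simp add: algebra_simps)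
    finally show ?thesis .
  qed
  also have "\<dots> \<le> ennreal (\<Phi> * (\<delta> + p * \<alpha> + (1 - p) * \<beta>))"
    using t1 \<Phi> by (intro ennreal_leI mult_left_mono) auto
  finally show ?thesis unfolding p_def .
qed

lemma expV_a:
  fixes a b fr \<theta> K \<delta> :: real
  assumes "0 \<le> a" "0 \<le> b" "0 < fr" "fr < 1" "0 \<le> \<theta>" "0 \<le> K" "0 < \<delta>"
  shows "exp (- V \<theta> K (a - ln fr) b) \<le> exp (- V \<theta> K a b) * (indicator {exp (- \<delta>)<..} fr + exp (- (\<theta> * \<delta>)))"
proof -
  have E: "0 \<le> - ln fr" using assms by simp
  have m: "V \<theta> K a b + \<theta> * (- ln fr) \<le> V \<theta> K (a - ln fr) b"
    using V_mono_a[OF assms(1,2) E assms(6)] by simp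
  show ?thesis
  proof (cases "exp (- \<delta>) < fr")
    case True
    have "V \<theta> K a b \<le> V \<theta> K (a - ln fr) b"
      using m E assms mult_nonneg_nonneg[of \<theta> "- ln fr"] by linarith
    then have "exp (- V \<theta> K (a - ln fr) b) \<le> exp (- V \<theta> K a b)" by simp
    then show ?thesis using True by (simp add: distrib_left add_increasing2)
  next
    case False
    then have "ln fr \<le> ln (exp (- \<delta>))" using assms by (subst ln_le_cancel_iff) auto
    then have "\<delta> \<le> - ln fr" by simp
    then have "\<theta> * \<delta> \<le> \<theta> * (- ln fr)" using assms by (intro mult_left_mono) auto
    then have "exp (- V \<theta> K (a - ln fr) b) \<le> exp (- V \<theta> K a b) * exp (- (\<theta> * \<delta>))"
      using m by (simp add: exp_add[symmetric])
    then show ?thesis using False by simp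
  qed
qed

lemma expV_b:
  fixes a b fr \<theta> K \<delta> :: real
  assumes "0 \<le> a" "0 \<le> b" "0 < fr" "fr < 1" "0 \<le> \<theta>" "0 \<le> K" "0 < \<delta>"
  shows "exp (- V \<theta> K a (b - ln fr)) \<le> exp (- V \<theta> K a b) * (indicator {exp (- \<delta>)<..} fr + exp (- (K * \<delta> * (a + 1) / (a + b + 2 + \<delta>))))"
proof -
  have E: "0 \<le> - ln fr" using assms by simp
  show ?thesis
  proof (cases "exp (- \<delta>) < fr")
    case True
    have "V \<theta> K a b \<le> V \<theta> K a (b - ln fr)"
      using V_mono_b[OF assms(1,2) _ assms(6), of "b - ln fr"] E by simp
    then have "exp (- V \<theta> K a (b - ln fr)) \<le> exp (- V \<theta> K a b)" by simp
    then show ?thesis using True by (simp add: distrib_left add_increasing2)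
  next
    case False
    then have "ln fr \<le> ln (exp (- \<delta>))" using assms by (subst ln_le_cancel_iff) auto
    then have "\<delta> \<le> - ln fr" by simp
    then have "V \<theta> K a b + K * \<delta> * (a + 1) / (a + b + 2 + \<delta>) \<le> V \<theta> K a (b + - ln fr)"
      using V_step_b[OF assms(1,2,7) _ assms(6)] by blast
    then have "exp (- V \<theta> K a (b - ln fr)) \<le> exp (- V \<theta> K a b) * exp (- (K * \<delta> * (a + 1) / (a + b + 2 + \<delta>)))"
      by (simp add: exp_add[symmetric])
    then show ?thesis using False by simp
  qed
qed

definition phiX :: "real \<Rightarrow> real \<Rightarrow> real \<times> real \<times> real \<Rightarrow> ennreal" where
  "phiX \<theta> K s = (if 0 < fst s \<and> fst s \<le> 1 \<and> 0 < fst (snd s) \<and> fst (snd s) \<le> 1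
     then ennreal (exp (- V \<theta> K (- ln (fst s)) (- ln (fst (snd s))))) else \<infinity>)"

definition phiY :: "real \<Rightarrow> real \<Rightarrow> real \<times> real \<times> real \<Rightarrow> ennreal" where
  "phiY \<theta> K s = (if 0 < fst s \<and> fst s \<le> 1 \<and> 0 < fst (snd s) \<and> fst (snd s) \<le> 1
     then ennreal (exp (- V \<theta> K (- ln (fst (snd s))) (- ln (fst s)))) else \<infinity>)"

lemma phiX_meas[measurable]: "phiX \<theta> K \<in> borel_measurable borel"
proof -
  let ?R = "(borel::real measure) \<Otimes>\<^sub>M ((borel::real measure) \<Otimes>\<^sub>M (borel::real measure))"
  have "phiX \<theta> K \<in> borel_measurable ?R" unfolding phiX_def V_def by measurable
  moreover have e: "sets ?R = sets (borel :: (real \<times> real \<times> real) measure)"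
    by (simp only: borel_prod)
  ultimately show ?thesis by (subst measurable_cong_sets[OF e[symmetric] refl])
qed

lemma phiY_meas[measurable]: "phiY \<theta> K \<in> borel_measurable borel"
proof -
  let ?R = "(borel::real measure) \<Otimes>\<^sub>M ((borel::real measure) \<Otimes>\<^sub>M (borel::real measure))"
  have "phiY \<theta> K \<in> borel_measurable ?R" unfolding phiY_def V_def by measurable
  moreover have e: "sets ?R = sets (borel :: (real \<times> real \<times> real) measure)"
    by (simp only: borel_prod)
  ultimately show ?thesis by (subst measurable_cong_sets[OF e[symmetric] refl])
qed

lemma ln_frB: fixes fr B :: real shows "0 < fr \<Longrightarrow> 0 < B \<Longrightarrow> - ln (fr * B) = - ln B - ln fr"
  by (simp add: ln_mult)

lemma two_sum:
  fixes f :: "bool \<Rightarrow> ennreal" and \<Phi> r :: real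
  assumes "\<And>c. f c \<le> ennreal (\<Phi> * r)" "0 \<le> \<Phi>" "0 \<le> r"
  shows "(\<Sum>c\<in>UNIV. f c) \<le> ennreal (2 * r) * ennreal \<Phi>"
proof -
  have "(\<Sum>c\<in>UNIV. f c) \<le> (\<Sum>c\<in>(UNIV::bool set). ennreal (\<Phi> * r))" by (intro sum_mono assms)
  also have "\<dots> = ennreal (2 * r) * ennreal \<Phi>"
  proof -
    have "(\<Sum>c\<in>(UNIV::bool set). ennreal (\<Phi> * r)) = ennreal 2 * ennreal (\<Phi> * r)" by simp
    also have "\<dots> = ennreal (2 * (\<Phi> * r))" using assms by (simp add: ennreal_mult)
    also have "\<dots> = ennreal (2 * r) * ennreal \<Phi>" using assms by (simp add: ennreal_mult[symmetric] mult_ac)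
    finally show ?thesis .
  qed
  finally show ?thesis .
qed

lemma sup_X:
  assumes s: "s \<in> SU" and \<theta>: "0 \<le> \<theta>" and K: "0 < K" and \<delta>: "0 < \<delta>" "\<delta> \<le> 1"
  shows "(\<Sum>c\<in>UNIV. \<integral>\<^sup>+l. phiX \<theta> K (stepl l s c) \<partial>label_measure)
     \<le> ennreal (2 * (\<delta> + exp (- (\<theta> * \<delta>)) + 3 / (K * \<delta>))) * phiX \<theta> K s"
proof -
  obtain B H T where sd: "s = (B, H, T)" by (cases s)
  have B: "0 < B" "B \<le> 1" and H: "0 < H" "H \<le> 1" using s by (auto simp: SU_def sd)
  define x where "x = - ln B"
  define y where "y = - ln H"
  have x: "0 \<le> x" and y: "0 \<le> y" using B H by (auto simp: x_def y_def)
  define \<Phi> where "\<Phi> = exp (- V \<theta> K x y)"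
  have \<Phi>s: "phiX \<theta> K s = ennreal \<Phi>" using B H by (simp add: phiX_def sd \<Phi>_def x_def y_def)
  define p where "p = Pf x y"
  have p: "0 \<le> p" "p \<le> 1" unfolding p_def using x y by (auto intro!: Pf_range)
  define \<alpha> where "\<alpha> = exp (- (\<theta> * \<delta>))"
  define \<beta> where "\<beta> = exp (- (K * \<delta> * (x + 1) / (x + y + 2 + \<delta>)))"
  have q: "(1 - p) * \<beta> \<le> 3 / (K * \<delta>)"
    unfolding \<beta>_def
    by (rule qlem[OF x y _ _ _ K \<delta>]) (use p in \<open>auto simp: p_def Pf_def\<close>)
  have one: "(\<integral>\<^sup>+l. phiX \<theta> K (stepl l s c) \<partial>label_measure) \<le> ennreal (\<Phi> * (\<delta> + \<alpha> + 3 / (K * \<delta>)))" for c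
  proof -
    have "(\<integral>\<^sup>+l. phiX \<theta> K (stepl l (B, H, T) c) \<partial>label_measure) \<le> ennreal (\<Phi> * (\<delta> + p * \<alpha> + (1 - p) * \<beta>))"
      unfolding p_def x_def y_def
    proof (rule ind_kernel[OF B H phiX_meas])
      fix fr e :: real assume fr: "0 < fr" "fr < 1" and e: "0 \<le> e"
      have fB: "0 < fr * B" "fr * B \<le> 1" "0 < fr * H" "fr * H \<le> 1" using fr B H by (auto intro: mult_le_one)
      show "phiX \<theta> K (fr * B, H, T + e / Rf (- ln B) (- ln H)) \<le> ennreal (\<Phi> * (indicator {exp (- \<delta>)<..} fr + \<alpha>))"
        using fB H expV_a[OF x y fr \<theta> _ \<delta>(1), of K] K
        by (auto simp: phiX_def ln_frB[OF fr(1) B(1)] x_def y_def \<alpha>_def \<Phi>_def intro!: ennreal_leI)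
      show "phiX \<theta> K (B, fr * H, T + e / Rf (- ln B) (- ln H)) \<le> ennreal (\<Phi> * (indicator {exp (- \<delta>)<..} fr + \<beta>))"
        using fB B expV_b[OF x y fr \<theta> _ \<delta>(1), of K] K
        by (auto simp: phiX_def ln_frB[OF fr(1) H(1)] x_def y_def \<beta>_def \<Phi>_def intro!: ennreal_leI)
    qed (auto simp: \<alpha>_def \<beta>_def \<delta> x_def[symmetric] y_def[symmetric] \<Phi>_def)
    also have "\<dots> \<le> ennreal (\<Phi> * (\<delta> + \<alpha> + 3 / (K * \<delta>)))"
    proof (intro ennreal_leI mult_left_mono)
      have "p * \<alpha> \<le> \<alpha>" using p by (simp add: \<alpha>_def mult_left_le_one_le)
      then show "\<delta> + p * \<alpha> + (1 - p) * \<beta> \<le> \<delta> + \<alpha> + 3 / (K * \<delta>)" using q by linarith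
    qed (simp add: \<Phi>_def)
    finally show ?thesis unfolding sd x_def y_def \<Phi>_def .
  qed
  show ?thesis unfolding \<Phi>s \<alpha>_def[symmetric]
    by (rule two_sum[OF one]) (use K \<delta> in \<open>auto simp: \<Phi>_def \<alpha>_def\<close>)
qed

lemma sup_Y:
  assumes s: "s \<in> SU" and \<theta>: "0 \<le> \<theta>" and K: "0 < K" and \<delta>: "0 < \<delta>" "\<delta> \<le> 1"
  shows "(\<Sum>c\<in>UNIV. \<integral>\<^sup>+l. phiY \<theta> K (stepl l s c) \<partial>label_measure)
     \<le> ennreal (2 * (\<delta> + exp (- (\<theta> * \<delta>)) + 3 / (K * \<delta>))) * phiY \<theta> K s"
proof -
  obtain B H T where sd: "s = (B, H, T)" by (cases s)
  have B: "0 < B" "B \<le> 1" and H: "0 < H" "H \<le> 1" using s by (auto simp: SU_def sd)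
  define x where "x = - ln B"
  define y where "y = - ln H"
  have x: "0 \<le> x" and y: "0 \<le> y" using B H by (auto simp: x_def y_def)
  define \<Phi> where "\<Phi> = exp (- V \<theta> K y x)"
  have \<Phi>s: "phiY \<theta> K s = ennreal \<Phi>" using B H by (simp add: phiY_def sd \<Phi>_def x_def y_def)
  define p where "p = Pf x y"
  have p: "0 \<le> p" "p \<le> 1" unfolding p_def using x y by (auto intro!: Pf_range)
  define \<alpha> where "\<alpha> = exp (- (K * \<delta> * (y + 1) / (y + x + 2 + \<delta>)))"
  define \<beta> where "\<beta> = exp (- (\<theta> * \<delta>))"
  have q: "p * \<alpha> \<le> 3 / (K * \<delta>)"
    unfolding \<alpha>_def
    by (rule qlem[OF y x _ _ _ K \<delta>]) (use p in \<open>auto simp: p_def Pf_def\<close>)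
  have one: "(\<integral>\<^sup>+l. phiY \<theta> K (stepl l s c) \<partial>label_measure) \<le> ennreal (\<Phi> * (\<delta> + \<beta> + 3 / (K * \<delta>)))" for c
  proof -
    have "(\<integral>\<^sup>+l. phiY \<theta> K (stepl l (B, H, T) c) \<partial>label_measure) \<le> ennreal (\<Phi> * (\<delta> + p * \<alpha> + (1 - p) * \<beta>))"
      unfolding p_def x_def y_def
    proof (rule ind_kernel[OF B H phiY_meas])
      fix fr e :: real assume fr: "0 < fr" "fr < 1" and e: "0 \<le> e"
      have fB: "0 < fr * B" "fr * B \<le> 1" "0 < fr * H" "fr * H \<le> 1" using fr B H by (auto intro: mult_le_one)
      show "phiY \<theta> K (fr * B, H, T + e / Rf (- ln B) (- ln H)) \<le> ennreal (\<Phi> * (indicator {exp (- \<delta>)<..} fr + \<alpha>))"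
        using fB H expV_b[OF y x fr \<theta> _ \<delta>(1), of K] K
        by (auto simp: phiY_def ln_frB[OF fr(1) B(1)] x_def y_def \<alpha>_def \<Phi>_def intro!: ennreal_leI)
      show "phiY \<theta> K (B, fr * H, T + e / Rf (- ln B) (- ln H)) \<le> ennreal (\<Phi> * (indicator {exp (- \<delta>)<..} fr + \<beta>))"
        using fB B expV_a[OF y x fr \<theta> _ \<delta>(1), of K] K
        by (auto simp: phiY_def ln_frB[OF fr(1) H(1)] x_def y_def \<beta>_def \<Phi>_def intro!: ennreal_leI)
    qed (auto simp: \<alpha>_def \<beta>_def \<delta> x_def[symmetric] y_def[symmetric] \<Phi>_def)
    also have "\<dots> \<le> ennreal (\<Phi> * (\<delta> + \<beta> + 3 / (K * \<delta>)))"
    proof (intro ennreal_leI mult_left_mono)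
      have "(1 - p) * \<beta> \<le> \<beta>" using p by (simp add: \<beta>_def mult_left_le_one_le)
      then show "\<delta> + p * \<alpha> + (1 - p) * \<beta> \<le> \<delta> + \<beta> + 3 / (K * \<delta>)" using q by linarith
    qed (simp add: \<Phi>_def)
    finally show ?thesis unfolding sd x_def y_def \<Phi>_def .
  qed
  show ?thesis unfolding \<Phi>s \<beta>_def[symmetric]
    by (rule two_sum[OF one]) (use K \<delta> in \<open>auto simp: \<Phi>_def \<beta>_def\<close>)
qed

definition good :: "sample \<Rightarrow> bool" where
  "good \<omega> = (\<forall>v. 0 < fst (\<omega> v) \<and> fst (\<omega> v) < 1 \<and> 0 \<le> snd (snd (\<omega> v)))"

lemma AE_good: "AE \<omega> in tree_space. good \<omega>"
  unfolding good_def tree_space_def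
  apply (subst AE_all_countable)
  apply (intro allI)
  apply (rule TP.AE_component[OF UNIV_I AE_L])
  done

lemma state_SU: "good \<omega> \<Longrightarrow> state \<omega> w \<in> SU"
proof (induction w rule: rev_induct)
  case Nil
  then show ?case by (simp add: state_def SU_def)
next
  case (snoc c w)
  then show ?case unfolding state_snoc using snoc by (intro stepl_SU) (auto simp: good_def)
qed

lemma state_meas: "(\<lambda>\<omega>. state \<omega> w) \<in> borel_measurable tree_space"
  unfolding state_gw by (rule ST.meas) auto

definition stpA :: "nat \<Rightarrow> nat \<Rightarrow> lab \<Rightarrow> (real \<times> real \<times> real) \<times> real \<Rightarrow> bool \<Rightarrow> (real \<times> real \<times> real) \<times> real" where
  "stpA m d l st c = (stepl l (fst st) c, snd st + (if m \<le> d then snd (snd l) else 0))"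

lemma stpA_meas: "(\<lambda>p. stpA m d (fst p) (snd p) c) \<in> measurable (label_measure \<Otimes>\<^sub>M (borel :: ((real \<times> real \<times> real) \<times> real) measure)) borel"
proof -
  let ?R = "(borel::real measure) \<Otimes>\<^sub>M ((borel::real measure) \<Otimes>\<^sub>M (borel::real measure))"
  have e: "sets ?R = sets (borel :: (real \<times> real \<times> real) measure)"
    by (simp only: borel_prod)
  have e2: "sets (?R \<Otimes>\<^sub>M (borel::real measure)) = sets (borel :: ((real \<times> real \<times> real) \<times> real) measure)"
    by (simp only: borel_prod)
  have l: "sets label_measure = sets ?R"
    unfolding label_measure_def by (intro sets_pair_measure_cong) auto
  have s1: "(\<lambda>p. stepl (fst p) (snd p) c) \<in> measurable (?R \<Otimes>\<^sub>M ?R) ?R"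
    using stepl_meas[of c] 
    by (subst (asm) measurable_cong_sets[OF sets_pair_measure_cong[OF l e[symmetric]] e[symmetric]])
  have "(\<lambda>p. stpA m d (fst p) (snd p) c) \<in> measurable (?R \<Otimes>\<^sub>M (?R \<Otimes>\<^sub>M borel)) (?R \<Otimes>\<^sub>M borel)"
    unfolding stpA_def
  proof (intro measurable_Pair)
    show "(\<lambda>x. stepl (fst x) (fst (snd x)) c) \<in> measurable (?R \<Otimes>\<^sub>M (?R \<Otimes>\<^sub>M borel)) ?R"
      using measurable_compose[OF measurable_Pair[OF measurable_fst measurable_compose[OF measurable_snd measurable_fst]] s1]
      by simp
  qed measurable
  then show ?thesis
    by (subst measurable_cong_sets[OF sets_pair_measure_cong[OF l e2[symmetric]] e2[symmetric]])
qed

interpretation SA: gwalk "stpA m"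
  by unfold_locales (rule stpA_meas)

lemma aw_fst: "fst (aw (stpA m) \<omega> v (s, S) w) = aw (\<lambda>_. stepl) \<omega> v s w"
proof (induction w arbitrary: v s S)
  case (Cons c cs)
  then show ?case by (simp add: stpA_def)
qed simp

definition SS :: "nat \<Rightarrow> sample \<Rightarrow> vertex \<Rightarrow> real" where
  "SS m \<omega> w = snd (aw (stpA m) \<omega> [] ((1, 1, 0), 0) w)"

lemma SS_snoc: "SS m \<omega> (w @ [c]) = SS m \<omega> w + (if m \<le> length w then ev \<omega> w else 0)"
  unfolding SS_def aw_snoc by (simp add: stpA_def ev_def)

lemma SS_gw: "SS m \<omega> w = snd (gw (stpA m) \<omega> 0 ((1, 1, 0), 0) w)"
  unfolding SS_def aw_gw by simp

lemma SS_meas: "(\<lambda>\<omega>. SS m \<omega> w) \<in> borel_measurable tree_space"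
proof -
  have "(\<lambda>\<omega>. gw (stpA m) \<omega> 0 ((1, 1, 0), 0) w) \<in> measurable tree_space borel"
    by (rule SA.meas) auto
  moreover have "snd \<in> borel_measurable (borel :: ((real \<times> real \<times> real) \<times> real) measure)"
    by (subst borel_prod[symmetric]) (rule measurable_snd)
  ultimately show ?thesis unfolding SS_gw by (rule measurable_compose)
qed

lemma take_Suc_snoc: "k < length v \<Longrightarrow> take (Suc k) v = take k v @ [v ! k]"
  by (simp add: take_Suc_conv_app_nth)

lemma T_ge_SS:
  assumes g: "good \<omega>" and R0: "0 \<le> R0"
    and hR: "\<And>j. m \<le> j \<Longrightarrow> j < length v \<Longrightarrow> Rf (Xv \<omega> (take j v)) (Yv \<omega> (take j v)) \<le> R0"
  shows "SS m \<omega> v \<le> R0 * Tv \<omega> v"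
proof -
  have "k \<le> length v \<Longrightarrow> SS m \<omega> (take k v) \<le> R0 * Tv \<omega> (take k v)" for k
  proof (induction k)
    case 0
    then show ?case by (simp add: SS_def Tv_def state_def)
  next
    case (Suc k)
    have k: "k < length v" using Suc by simp
    define w where "w = take k v"
    have lw: "length w = k" using k by (simp add: w_def)
    have IH: "SS m \<omega> w \<le> R0 * Tv \<omega> w" using Suc by (simp add: w_def)
    have sSU: "state \<omega> w \<in> SU" by (rule state_SU[OF g])
    obtain B H T where st: "state \<omega> w = (B, H, T)" by (cases "state \<omega> w")
    have B: "0 < B" "B \<le> 1" and H: "0 < H" "H \<le> 1" and T: "0 \<le> T" using sSU by (auto simp: SU_def st)
    define R where "R = Rf (- ln B) (- ln H)"
    have R1: "1 \<le> R" unfolding R_def using B H by (intro Rf_ge1) auto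
    have e: "0 \<le> ev \<omega> w" using g by (auto simp: good_def ev_def)
    obtain us ud e' where lab: "\<omega> w = (us, ud, e')" by (cases "\<omega> w")
    have Tw: "Tv \<omega> w = T" by (simp add: Tv_def st)
    have Tn: "Tv \<omega> (w @ [v ! k]) = T + ev \<omega> w / R"
      unfolding Tv_def state_snoc st lab by (simp add: stepl_eq ev_def lab R_def)
    have "SS m \<omega> (w @ [v ! k]) \<le> R0 * Tv \<omega> (w @ [v ! k])"
    proof (cases "m \<le> k")
      case True
      have RR: "R \<le> R0" using hR[OF True k] unfolding R_def Xv_def Yv_def Bv_def Hv_def w_def[symmetric] st by simp
      have "ev \<omega> w \<le> R0 * (ev \<omega> w / R)"
      proof -
        have "ev \<omega> w = R * (ev \<omega> w / R)" using R1 by simp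
        also have "\<dots> \<le> R0 * (ev \<omega> w / R)" using RR e R1 by (intro mult_right_mono) auto
        finally show ?thesis .
      qed
      then show ?thesis using IH True lw unfolding SS_snoc Tn Tw by (simp add: algebra_simps)
    next
      case False
      have "0 \<le> R0 * (ev \<omega> w / R)" using R0 e R1 by simp
      then show ?thesis using IH False lw unfolding SS_snoc Tn Tw by (simp add: algebra_simps)
    qed
    then show ?case using take_Suc_snoc[OF k] by (simp add: w_def)
  qed
  from this[of "length v"] show ?thesis by simp
qed

lemma one_SU: "(1, 1, 0) \<in> SU" by (simp add: SU_def)

lemma intU: "(\<integral>\<^sup>+\<omega>. (\<Sum>w\<in>{w. length w = n}. phiU (state \<omega> w)) \<partial>tree_space) \<le> 8 ^ n"
proof -
  have "(\<integral>\<^sup>+\<omega>. (\<Sum>w\<in>{w. length w = n}. phiU (gw (\<lambda>_. stepl) \<omega> 0 (1, 1, 0) w)) \<partial>tree_space) \<le> (\<Prod>i<n. 8) * phiU (1, 1, 0)"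
    using ST.bound[of "\<lambda>_. phiU" "\<lambda>_. SU" "\<lambda>_. 8" "(1, 1, 0)" 0 n] inv_SU sup_U one_SU by simp
  then show ?thesis by (simp add: state_gw phiU_def)
qed

lemma intX:
  assumes \<theta>: "0 \<le> \<theta>" and K: "0 < K" and \<delta>: "0 < \<delta>" "\<delta> \<le> 1"
  shows "(\<integral>\<^sup>+\<omega>. (\<Sum>w\<in>{w. length w = n}. phiX \<theta> K (state \<omega> w)) \<partial>tree_space) \<le> ennreal (2 * (\<delta> + exp (- (\<theta> * \<delta>)) + 3 / (K * \<delta>))) ^ n"
proof -
  have "(\<integral>\<^sup>+\<omega>. (\<Sum>w\<in>{w. length w = n}. phiX \<theta> K (gw (\<lambda>_. stepl) \<omega> 0 (1, 1, 0) w)) \<partial>tree_space)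
     \<le> (\<Prod>i<n. ennreal (2 * (\<delta> + exp (- (\<theta> * \<delta>)) + 3 / (K * \<delta>)))) * phiX \<theta> K (1, 1, 0)"
    using ST.bound[of "\<lambda>_. phiX \<theta> K" "\<lambda>_. SU" "\<lambda>_. ennreal (2 * (\<delta> + exp (- (\<theta> * \<delta>)) + 3 / (K * \<delta>)))" "(1, 1, 0)" 0 n]
      inv_SU sup_X[OF _ \<theta> K \<delta>] one_SU by simp
  also have "\<dots> \<le> (\<Prod>i<n. ennreal (2 * (\<delta> + exp (- (\<theta> * \<delta>)) + 3 / (K * \<delta>)))) * 1"
  proof (intro mult_left_mono)
    have "0 \<le> V \<theta> K 0 0" by (rule V_nonneg) (use \<theta> K in auto)
    then show "phiX \<theta> K (1, 1, 0) \<le> 1" by (simp add: phiX_def)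
  qed simp
  finally show ?thesis by (simp add: state_gw)
qed

lemma intY:
  assumes \<theta>: "0 \<le> \<theta>" and K: "0 < K" and \<delta>: "0 < \<delta>" "\<delta> \<le> 1"
  shows "(\<integral>\<^sup>+\<omega>. (\<Sum>w\<in>{w. length w = n}. phiY \<theta> K (state \<omega> w)) \<partial>tree_space) \<le> ennreal (2 * (\<delta> + exp (- (\<theta> * \<delta>)) + 3 / (K * \<delta>))) ^ n"
proof -
  have "(\<integral>\<^sup>+\<omega>. (\<Sum>w\<in>{w. length w = n}. phiY \<theta> K (gw (\<lambda>_. stepl) \<omega> 0 (1, 1, 0) w)) \<partial>tree_space)
     \<le> (\<Prod>i<n. ennreal (2 * (\<delta> + exp (- (\<theta> * \<delta>)) + 3 / (K * \<delta>)))) * phiY \<theta> K (1, 1, 0)"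
    using ST.bound[of "\<lambda>_. phiY \<theta> K" "\<lambda>_. SU" "\<lambda>_. ennreal (2 * (\<delta> + exp (- (\<theta> * \<delta>)) + 3 / (K * \<delta>)))" "(1, 1, 0)" 0 n]
      inv_SU sup_Y[OF _ \<theta> K \<delta>] one_SU by simp
  also have "\<dots> \<le> (\<Prod>i<n. ennreal (2 * (\<delta> + exp (- (\<theta> * \<delta>)) + 3 / (K * \<delta>)))) * 1"
  proof (intro mult_left_mono)
    have "0 \<le> V \<theta> K 0 0" by (rule V_nonneg) (use \<theta> K in auto)
    then show "phiY \<theta> K (1, 1, 0) \<le> 1" by (simp add: phiY_def)
  qed simp
  finally show ?thesis by (simp add: state_gw)
qed

lemma L_e:
  assumes [measurable]: "f \<in> borel_measurable borel"
  shows "(\<integral>\<^sup>+l. f (snd (snd l)) \<partial>label_measure) = (\<integral>\<^sup>+e. f e \<partial>Ex)"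
proof -
  have m: "(\<lambda>l. f (snd (snd l))) \<in> borel_measurable label_measure"
    unfolding label_measure_def by measurable
  show ?thesis
    by (subst L_int[OF m]) (simp add: PU.emeasure_space_1)
qed

lemma prod_rho:
  fixes \<theta> :: real assumes "0 \<le> \<theta>"
  shows "(\<Prod>i<n. ennreal (if i < m then 2 else 2 / (1 + \<theta>))) = ennreal (2 ^ n / (1 + \<theta>) ^ (n - m))"
proof (induction n)
  case 0 then show ?case by simp
next
  case (Suc n)
  have "(\<Prod>i<Suc n. ennreal (if i < m then 2 else 2 / (1 + \<theta>))) = ennreal (2 ^ n / (1 + \<theta>) ^ (n - m)) * ennreal (if n < m then 2 else 2 / (1 + \<theta>))"
    using Suc.IH by simp
  also have "\<dots> = ennreal (2 ^ n / (1 + \<theta>) ^ (n - m) * (if n < m then 2 else 2 / (1 + \<theta>)))"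
    by (rule ennreal_mult''[symmetric]) (use assms in simp)
  also have "2 ^ n / (1 + \<theta>) ^ (n - m) * (if n < m then 2 else 2 / (1 + \<theta>)) = 2 ^ Suc n / (1 + \<theta>) ^ (Suc n - m)"
  proof (cases "n < m")
    case True
    then have "Suc n - m = 0" "n - m = 0" by auto
    then show ?thesis using True by simp
  next
    case False
    then have "Suc n - m = Suc (n - m)" by auto
    then show ?thesis using False assms by (simp add: field_simps)
  qed
  finally show ?case .
qed

lemma intS:
  assumes \<theta>: "0 \<le> \<theta>"
  shows "(\<integral>\<^sup>+\<omega>. (\<Sum>w\<in>{w. length w = n}. ennreal (exp (- \<theta> * SS m \<omega> w))) \<partial>tree_space) \<le> ennreal (2 ^ n / (1 + \<theta>) ^ (n - m))"
proof -
  define \<phi> where "\<phi> = (\<lambda>st :: (real \<times> real \<times> real) \<times> real. ennreal (exp (- \<theta> * snd st)))"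
  have \<phi>m: "\<phi> \<in> borel_measurable borel"
  proof -
    have "snd \<in> borel_measurable (borel :: ((real \<times> real \<times> real) \<times> real) measure)"
      by (subst borel_prod[symmetric]) (rule measurable_snd)
    then show ?thesis unfolding \<phi>_def by measurable
  qed
  have sup: "(\<Sum>c\<in>UNIV. \<integral>\<^sup>+l. \<phi> (stpA m j l st c) \<partial>label_measure) \<le> ennreal (if j < m then 2 else 2 / (1 + \<theta>)) * \<phi> st" for j st
  proof -
    have "(\<integral>\<^sup>+l. \<phi> (stpA m j l st c) \<partial>label_measure) = ennreal (if j < m then 1 else 1 / (1 + \<theta>)) * \<phi> st" for c
    proof (cases "j < m")
      case True
      then show ?thesis by (simp add: \<phi>_def stpA_def L.emeasure_space_1)
    next
      case False
      have "(\<integral>\<^sup>+l. \<phi> (stpA m j l st c) \<partial>label_measure) = (\<integral>\<^sup>+l. \<phi> st * ennreal (exp ((- \<theta>) * snd (snd l))) \<partial>label_measure)"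
        using False by (intro nn_integral_cong) (simp add: \<phi>_def stpA_def ennreal_mult[symmetric] exp_add[symmetric] algebra_simps)
      also have "\<dots> = \<phi> st * (\<integral>\<^sup>+l. ennreal (exp ((- \<theta>) * snd (snd l))) \<partial>label_measure)"
        by (rule nn_integral_cmult) (simp add: label_measure_def)
      also have "(\<integral>\<^sup>+l. ennreal (exp ((- \<theta>) * snd (snd l))) \<partial>label_measure) = ennreal (1 / (1 - (- \<theta>)))"
      proof -
        have "(\<integral>\<^sup>+l. ennreal (exp ((- \<theta>) * snd (snd l))) \<partial>label_measure) = (\<integral>\<^sup>+e. ennreal (exp ((- \<theta>) * e)) \<partial>Ex)"
          by (rule L_e) measurable
        also have "\<dots> = ennreal (1 / (1 - (- \<theta>)))"
          by (rule Ex_exp) (use \<theta> in linarith)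
        finally show ?thesis .
      qed
      finally show ?thesis using False by (simp add: mult.commute)
    qed
    then have "(\<Sum>c\<in>UNIV. \<integral>\<^sup>+l. \<phi> (stpA m j l st c) \<partial>label_measure) = 2 * (ennreal (if j < m then 1 else 1 / (1 + \<theta>)) * \<phi> st)"
      by simp
    also have "\<dots> = ennreal (if j < m then 2 else 2 / (1 + \<theta>)) * \<phi> st"
    proof -
      have "ennreal (2 / (1 + \<theta>)) = ennreal 2 * ennreal (1 / (1 + \<theta>))"
        using \<theta> ennreal_mult[of 2 "1 / (1 + \<theta>)"] by simp
      then show ?thesis by (simp add: mult.assoc)
    qed
    finally show ?thesis by simp
  qed
  have "(\<integral>\<^sup>+\<omega>. (\<Sum>w\<in>{w. length w = n}. \<phi> (gw (stpA m) \<omega> 0 ((1, 1, 0), 0) w)) \<partial>tree_space)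
     \<le> (\<Prod>i<n. ennreal (if 0 + i < m then 2 else 2 / (1 + \<theta>))) * \<phi> ((1, 1, 0), 0)"
    by (rule SA.bound[where \<phi>="\<lambda>_. \<phi>" and S="\<lambda>_. UNIV" and \<rho>="\<lambda>j. ennreal (if j < m then 2 else 2 / (1 + \<theta>))"]) (auto simp: \<phi>m sup)
  then show ?thesis using prod_rho[OF \<theta>, where n=n and m=m] by (simp add: \<phi>_def SS_gw)
qed

lemma markov:
  fixes g :: "sample \<Rightarrow> vertex \<Rightarrow> ennreal"
  assumes E: "E \<in> sets tree_space"
    and cov: "\<And>\<omega>. \<omega> \<in> E \<Longrightarrow> good \<omega> \<Longrightarrow> \<exists>w. length w = n \<and> c \<le> g \<omega> w"
  shows "c * emeasure tree_space E \<le> (\<integral>\<^sup>+\<omega>. (\<Sum>w\<in>{w. length w = n}. g \<omega> w) \<partial>tree_space)"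
proof -
  have "c * emeasure tree_space E = (\<integral>\<^sup>+\<omega>. c * indicator E \<omega> \<partial>tree_space)"
    using E by (simp add: nn_integral_cmult_indicator)
  also have "\<dots> \<le> (\<integral>\<^sup>+\<omega>. (\<Sum>w\<in>{w. length w = n}. g \<omega> w) \<partial>tree_space)"
    using AE_good
  proof (intro nn_integral_mono_AE, eventually_elim)
    case (elim \<omega>)
    show ?case
    proof (cases "\<omega> \<in> E")
      case True
      then obtain w where w: "length w = n" "c \<le> g \<omega> w" using cov elim by blast
      have "g \<omega> w \<le> (\<Sum>w\<in>{w. length w = n}. g \<omega> w)"
        by (rule member_le_sum) (auto simp: w finite_gen)
      then show ?thesis using True w by simp
    qed simp
  qed
  finally show ?thesis .
qed

definition GXY :: "real \<Rightarrow> real \<Rightarrow> real \<Rightarrow> real \<Rightarrow> real \<times> real \<times> real \<Rightarrow> ennreal" where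
  "GXY \<theta> K M1 k st = phiU st * ennreal (exp (- (M1 * k / 2))) + (phiX \<theta> K st + phiY \<theta> K st) * ennreal (exp (V \<theta> K (k / M1) (M1 * k)))"

lemma GXY_meas[measurable]: "GXY \<theta> K M1 k \<in> borel_measurable borel"
  unfolding GXY_def by measurable

lemma phiU_SU: "st \<in> SU \<Longrightarrow> phiU st = ennreal ((fst st * fst (snd st)) powr (-1/2) * exp (snd (snd st) / 2))"
  by (simp add: phiU_def SU_def)

lemma powr_BH: fixes B H :: real assumes "0 < B" "0 < H" shows "(B * H) powr (-1/2) = exp ((- ln B - ln H) / 2)"
  using assms by (simp add: powr_def ln_mult algebra_simps)

lemma cover_XY:
  assumes st: "st \<in> SU" and M1: "1 \<le> M1" and \<theta>: "0 \<le> \<theta>" and K: "0 \<le> K" and k: "0 \<le> k"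
    and bad: "- ln (fst st) \<notin> {k / M1 .. M1 * k} \<or> - ln (fst (snd st)) \<notin> {k / M1 .. M1 * k}"
  shows "1 \<le> GXY \<theta> K M1 k st"
proof -
  obtain B H T where sd: "st = (B, H, T)" by (cases st)
  have B: "0 < B" "B \<le> 1" and H: "0 < H" "H \<le> 1" and T: "0 \<le> T" using st by (auto simp: SU_def sd)
  define x where "x = - ln B"
  define y where "y = - ln H"
  have x: "0 \<le> x" and y: "0 \<le> y" using B H by (auto simp: x_def y_def)
  have bad': "x \<notin> {k / M1 .. M1 * k} \<or> y \<notin> {k / M1 .. M1 * k}" using bad by (simp add: sd x_def y_def)
  have pU0: "phiU st = ennreal ((B * H) powr (-1/2) * exp (T / 2))"
    using B H T by (simp add: phiU_def sd)
  have pU: "phiU st = ennreal (exp ((x + y) / 2) * exp (T / 2))"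
    unfolding pU0 powr_BH[OF B(1) H(1)] x_def y_def by simp
  have pX: "phiX \<theta> K st = ennreal (exp (- V \<theta> K x y))" using B H by (simp add: phiX_def sd x_def y_def)
  have pY: "phiY \<theta> K st = ennreal (exp (- V \<theta> K y x))" using B H by (simp add: phiY_def sd x_def y_def)
  show ?thesis
  proof (cases "M1 * k < x \<or> M1 * k < y")
    case True
    have "M1 * k / 2 \<le> (x + y) / 2 + T / 2" using True x y T by (auto simp: field_simps)
    then have "1 \<le> exp ((x + y) / 2) * exp (T / 2) * exp (- (M1 * k / 2))"
      by (simp add: exp_add[symmetric] exp_diff)
    then have "1 \<le> phiU st * ennreal (exp (- (M1 * k / 2)))"
      unfolding pU by (simp add: ennreal_mult[symmetric] ennreal_1[symmetric] del: ennreal_1)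
    then show ?thesis unfolding GXY_def by (simp add: add_increasing2)
  next
    case False
    then have xu: "x \<le> M1 * k" and yu: "y \<le> M1 * k" by auto
    let ?W = "V \<theta> K (k / M1) (M1 * k)"
    show ?thesis
    proof (cases "x < k / M1")
      case True
      have "V \<theta> K x y + \<theta> * (k / M1 - x) \<le> V \<theta> K (x + (k / M1 - x)) y"
        by (rule V_mono_a) (use x y True K in auto)
      moreover have "0 \<le> \<theta> * (k / M1 - x)" using True \<theta> by simp
      moreover have "V \<theta> K (k / M1) y \<le> ?W"
        by (rule V_mono_b) (use y yu K k M1 in auto)
      ultimately have "V \<theta> K x y \<le> ?W" by simp
      then have "1 \<le> exp (- V \<theta> K x y) * exp ?W" by (simp add: exp_add[symmetric])
      then have "1 \<le> phiX \<theta> K st * ennreal (exp ?W)"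
        unfolding pX by (simp add: ennreal_mult[symmetric] ennreal_1[symmetric] del: ennreal_1)
      then show ?thesis unfolding GXY_def
        by (simp add: distrib_right add_increasing2 add_increasing)
    next
      case False
      then have yl: "y < k / M1" using bad' xu yu by auto
      have "V \<theta> K y x + \<theta> * (k / M1 - y) \<le> V \<theta> K (y + (k / M1 - y)) x"
        by (rule V_mono_a) (use x y yl K in auto)
      moreover have "0 \<le> \<theta> * (k / M1 - y)" using yl \<theta> by simp
      moreover have "V \<theta> K (k / M1) x \<le> ?W"
        by (rule V_mono_b) (use x xu K k M1 in auto)
      ultimately have "V \<theta> K y x \<le> ?W" by simp
      then have "1 \<le> exp (- V \<theta> K y x) * exp ?W" by (simp add: exp_add[symmetric])
      then have "1 \<le> phiY \<theta> K st * ennreal (exp ?W)"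
        unfolding pY by (simp add: ennreal_mult[symmetric] ennreal_1[symmetric] del: ennreal_1)
      then show ?thesis unfolding GXY_def
        by (simp add: distrib_right add_increasing2 add_increasing)
    qed
  qed
qed

lemma sum_state_meas:
  fixes f :: "real \<times> real \<times> real \<Rightarrow> ennreal"
  assumes [measurable]: "f \<in> borel_measurable borel"
  shows "(\<lambda>\<omega>. \<Sum>w\<in>{w. length w = n}. f (state \<omega> w)) \<in> borel_measurable tree_space"
  by (rule borel_measurable_sum) (rule measurable_compose[OF state_meas assms])

lemma intGXY:
  assumes \<theta>: "0 \<le> \<theta>" and K: "0 < K" and \<delta>: "0 < \<delta>" "\<delta> \<le> 1"
  shows "(\<integral>\<^sup>+\<omega>. (\<Sum>w\<in>{w. length w = n}. GXY \<theta> K M1 (real n) (state \<omega> w)) \<partial>tree_space)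
    \<le> ennreal (8 ^ n * exp (- (M1 * n / 2)) + 2 * (2 * (\<delta> + exp (- (\<theta> * \<delta>)) + 3 / (K * \<delta>))) ^ n * exp (V \<theta> K (n / M1) (M1 * n)))"
proof -
  let ?a = "ennreal (exp (- (M1 * n / 2)))"
  let ?b = "ennreal (exp (V \<theta> K (n / M1) (M1 * n)))"
  let ?r = "2 * (\<delta> + exp (- (\<theta> * \<delta>)) + 3 / (K * \<delta>))"
  have r0: "0 \<le> ?r" using K \<delta> by (intro mult_nonneg_nonneg add_nonneg_nonneg) auto
  have "(\<integral>\<^sup>+\<omega>. (\<Sum>w\<in>{w. length w = n}. GXY \<theta> K M1 (real n) (state \<omega> w)) \<partial>tree_space)
     = (\<integral>\<^sup>+\<omega>. ?a * (\<Sum>w\<in>{w. length w = n}. phiU (state \<omega> w)) + (?b * (\<Sum>w\<in>{w. length w = n}. phiX \<theta> K (state \<omega> w)) + ?b * (\<Sum>w\<in>{w. length w = n}. phiY \<theta> K (state \<omega> w))) \<partial>tree_space)"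
    by (intro nn_integral_cong) (simp add: GXY_def sum.distrib sum_distrib_left algebra_simps)
  also have "\<dots> = ?a * (\<integral>\<^sup>+\<omega>. (\<Sum>w\<in>{w. length w = n}. phiU (state \<omega> w)) \<partial>tree_space)
      + (?b * (\<integral>\<^sup>+\<omega>. (\<Sum>w\<in>{w. length w = n}. phiX \<theta> K (state \<omega> w)) \<partial>tree_space)
      + ?b * (\<integral>\<^sup>+\<omega>. (\<Sum>w\<in>{w. length w = n}. phiY \<theta> K (state \<omega> w)) \<partial>tree_space))"
  proof -
    note [measurable] = sum_state_meas[OF phiU_meas, of n] sum_state_meas[OF phiX_meas, of \<theta> K n] sum_state_meas[OF phiY_meas, of \<theta> K n]
    show ?thesis
      by (subst nn_integral_add, measurable, subst nn_integral_add, measurable)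
         (simp add: nn_integral_cmult)
  qed
  also have "\<dots> \<le> ?a * 8 ^ n + (?b * ennreal ?r ^ n + ?b * ennreal ?r ^ n)"
    by (intro add_mono mult_left_mono intU intX intY \<theta> K \<delta>) auto
  also have "\<dots> = ennreal (8 ^ n * exp (- (M1 * n / 2)) + 2 * ?r ^ n * exp (V \<theta> K (n / M1) (M1 * n)))"
  proof -
    have e1: "?a * 8 ^ n = ennreal (8 ^ n * exp (- (M1 * n / 2)))"
      by (simp add: ennreal_mult ennreal_power[symmetric] mult.commute)
    have e2: "?b * ennreal ?r ^ n = ennreal (?r ^ n * exp (V \<theta> K (n / M1) (M1 * n)))"
      using r0 by (simp add: ennreal_mult ennreal_power[symmetric] mult.commute)
    have n1: "0 \<le> 8 ^ n * exp (- (M1 * n / 2))" by simp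
    have n2: "0 \<le> ?r ^ n * exp (V \<theta> K (n / M1) (M1 * n))" using r0 by simp
    show ?thesis unfolding e1 e2
      using n1 n2 by (simp add: ennreal_plus[symmetric] del: ennreal_plus) (simp add: algebra_simps)
  qed
  finally show ?thesis .
qed

lemma fst3_meas: "fst \<in> borel_measurable (borel :: (real \<times> real \<times> real) measure)"
  by (subst borel_prod[symmetric]) (rule measurable_fst)
lemma snd3_meas: "snd \<in> borel_measurable (borel :: (real \<times> real \<times> real) measure)"
  by (subst borel_prod[symmetric]) (rule measurable_snd)
lemma fst2_meas: "fst \<in> borel_measurable (borel :: (real \<times> real) measure)"
  by (subst borel_prod[symmetric]) (rule measurable_fst)
lemma snd2_meas: "snd \<in> borel_measurable (borel :: (real \<times> real) measure)"
  by (subst borel_prod[symmetric]) (rule measurable_snd)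

lemma Bv_meas[measurable]: "(\<lambda>\<omega>. Bv \<omega> v) \<in> borel_measurable tree_space"
  unfolding Bv_def by (rule measurable_compose[OF state_meas fst3_meas])
lemma Hv_meas[measurable]: "(\<lambda>\<omega>. Hv \<omega> v) \<in> borel_measurable tree_space"
  unfolding Hv_def by (rule measurable_compose[OF measurable_compose[OF state_meas snd3_meas] fst2_meas])
lemma Tv_meas[measurable]: "(\<lambda>\<omega>. Tv \<omega> v) \<in> borel_measurable tree_space"
  unfolding Tv_def by (rule measurable_compose[OF measurable_compose[OF state_meas snd3_meas] snd2_meas])
lemma Xv_meas[measurable]: "(\<lambda>\<omega>. Xv \<omega> v) \<in> borel_measurable tree_space"
  unfolding Xv_def by measurable
lemma Yv_meas[measurable]: "(\<lambda>\<omega>. Yv \<omega> v) \<in> borel_measurable tree_space"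
  unfolding Yv_def by measurable
lemma ev_meas[measurable]: "(\<lambda>\<omega>. ev \<omega> v) \<in> borel_measurable tree_space"
proof -
  let ?R = "(borel::real measure) \<Otimes>\<^sub>M ((borel::real measure) \<Otimes>\<^sub>M (borel::real measure))"
  have l: "sets label_measure = sets ?R"
    unfolding label_measure_def by (intro sets_pair_measure_cong) auto
  have "(\<lambda>\<omega>. \<omega> v) \<in> measurable tree_space ?R"
    using root_meas[OF measurable_ident_sets[OF refl], of v]
    by (subst (asm) measurable_cong_sets[OF refl l]) simp
  then show ?thesis unfolding ev_def by measurable
qed

lemma E_meas:
  "{\<omega> \<in> space tree_space. \<exists>v::vertex. length v = n \<and>
               (Xv \<omega> v \<notin> {a .. b} \<or> Yv \<omega> v \<notin> {a .. b} \<or> Tv \<omega> v < a \<or>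
                Tv \<omega> v + ev \<omega> v / Rf (Xv \<omega> v) (Yv \<omega> v) > b)} \<in> sets tree_space"
proof -
  have "{\<omega> \<in> space tree_space. \<exists>v::vertex. length v = n \<and>
               (Xv \<omega> v \<notin> {a .. b} \<or> Yv \<omega> v \<notin> {a .. b} \<or> Tv \<omega> v < a \<or>
                Tv \<omega> v + ev \<omega> v / Rf (Xv \<omega> v) (Yv \<omega> v) > b)}
     = {\<omega> \<in> space tree_space. \<exists>v\<in>{v::vertex. length v = n}.
               (Xv \<omega> v < a \<or> Xv \<omega> v > b \<or> Yv \<omega> v < a \<or> Yv \<omega> v > b \<or> Tv \<omega> v < a \<or>
                Tv \<omega> v + ev \<omega> v / Rf (Xv \<omega> v) (Yv \<omega> v) > b)}"
    by auto
  also have "\<dots> \<in> sets tree_space"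
    using finite_gen[of n] by measurable
  finally show ?thesis .
qed

lemma markov1:
  fixes G :: "sample \<Rightarrow> ennreal"
  assumes E: "E \<in> sets tree_space"
    and cov: "\<And>\<omega>. \<omega> \<in> E \<Longrightarrow> good \<omega> \<Longrightarrow> 1 \<le> G \<omega>"
  shows "emeasure tree_space E \<le> (\<integral>\<^sup>+\<omega>. G \<omega> \<partial>tree_space)"
proof -
  have "emeasure tree_space E = (\<integral>\<^sup>+\<omega>. indicator E \<omega> \<partial>tree_space)"
    using E by simp
  also have "\<dots> \<le> (\<integral>\<^sup>+\<omega>. G \<omega> \<partial>tree_space)"
    using AE_good
  proof (intro nn_integral_mono_AE, eventually_elim)
    case (elim \<omega>)
    then show ?case using cov by (cases "\<omega> \<in> E") auto
  qed
  finally show ?thesis .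
qed

lemma Rf_le:
  assumes M1: "1 \<le> M1" and j: "0 \<le> j"
    and x: "j / M1 \<le> x" "x \<le> M1 * j" and y: "j / M1 \<le> y" "y \<le> M1 * j"
  shows "Rf x y \<le> M1 ^ 2"
proof -
  have jm: "0 \<le> j / M1" using M1 j by simp
  have key: "u + 1 \<le> M1 ^ 2 * (w + 1)" if u: "u \<le> M1 * j" and w: "j / M1 \<le> w" for u w
  proof -
    have "M1 ^ 2 * (j / M1 + 1) = M1 * j + M1 ^ 2" using M1 by (simp add: power2_eq_square field_simps)
    moreover have "1 \<le> M1 ^ 2" using M1 by (simp add: one_le_power)
    moreover have "M1 ^ 2 * (j / M1 + 1) \<le> M1 ^ 2 * (w + 1)" using w by (intro mult_left_mono) auto
    ultimately show ?thesis using u by linarith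
  qed
  have yp: "0 < y + 1" and xp: "0 < x + 1" using jm x y by linarith+
  have "(x + 1) / (y + 1) \<le> M1 ^ 2"
    using key[OF x(2) y(1)] by (subst pos_divide_le_eq[OF yp]) (simp add: mult.commute)
  moreover have "(y + 1) / (x + 1) \<le> M1 ^ 2"
    using key[OF y(2) x(1)] by (subst pos_divide_le_eq[OF xp]) (simp add: mult.commute)
  ultimately show ?thesis by (simp add: Rf_def)
qed

lemma phiU_lower:
  assumes st: "st \<in> SU"
  shows "ennreal (exp (snd (snd st) / 2)) \<le> phiU st"
proof -
  obtain B H T where sd: "st = (B, H, T)" by (cases st)
  have B: "0 < B" "B \<le> 1" and H: "0 < H" "H \<le> 1" using st by (auto simp: SU_def sd)
  have "ln B \<le> 0" "ln H \<le> 0" using B H by auto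
  then have "0 \<le> (- ln B - ln H) / 2" by simp
  then have "1 \<le> (B * H) powr (-1/2)" unfolding powr_BH[OF B(1) H(1)] by simp
  then have "exp (T / 2) \<le> (B * H) powr (-1/2) * exp (T / 2)" by simp
  then show ?thesis using st by (simp add: phiU_SU sd)
qed

lemma Tv_child: "Tv \<omega> (v @ [False]) = Tv \<omega> v + ev \<omega> v / Rf (Xv \<omega> v) (Yv \<omega> v)"
proof -
  obtain B H T where st: "state \<omega> v = (B, H, T)" by (cases "state \<omega> v")
  obtain us ud e where lab: "\<omega> v = (us, ud, e)" by (cases "\<omega> v")
  show ?thesis
    unfolding Tv_def state_snoc st lab
    by (simp add: stepl_eq Xv_def Yv_def Bv_def Hv_def st ev_def lab)
qed

lemma main_bound:
  fixes \<theta> K \<delta> M1 M \<theta>' :: real and n :: nat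
  assumes \<theta>: "0 \<le> \<theta>" and K: "0 < K" and \<delta>: "0 < \<delta>" "\<delta> \<le> 1" and M1: "1 \<le> M1" and M: "M1 \<le> M"
    and \<theta>': "0 \<le> \<theta>'"
  defines "m \<equiv> n div 2"
  defines "\<rho> \<equiv> 2 * (\<delta> + exp (- (\<theta> * \<delta>)) + 3 / (K * \<delta>))"
  defines "bXY \<equiv> (\<lambda>k::nat. 8 ^ k * exp (- (M1 * k / 2)) + 2 * \<rho> ^ k * exp (V \<theta> K (k / M1) (M1 * k)))"
  shows "emeasure tree_space {\<omega> \<in> space tree_space. \<exists>v::vertex. length v = n \<and>
               (Xv \<omega> v \<notin> {real n / M .. M * real n} \<or>
                Yv \<omega> v \<notin> {real n / M .. M * real n} \<or>
                Tv \<omega> v < real n / M \<or>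
                Tv \<omega> v + ev \<omega> v / Rf (Xv \<omega> v) (Yv \<omega> v) > M * real n)}
    \<le> ennreal (bXY n + (\<Sum>j\<in>{m..<n}. bXY j) + 8 ^ (Suc n) * exp (- (M * n / 2))
               + 2 ^ n / (1 + \<theta>') ^ (n - m) * exp (\<theta>' * (M1 ^ 2 * n / M)))"
    (is "emeasure _ ?E \<le> _")
proof -
  have M0: "0 < M" "0 < M1" using M1 M by auto
  define G1 where "G1 \<omega> = (\<Sum>w\<in>{w. length w = n}. GXY \<theta> K M1 (real n) (state \<omega> w))" for \<omega>
  define G2 where "G2 \<omega> = (\<Sum>j\<in>{m..<n}. \<Sum>w\<in>{w. length w = j}. GXY \<theta> K M1 (real j) (state \<omega> w))" for \<omega>
  define G3 where "G3 \<omega> = (\<Sum>w\<in>{w. length w = Suc n}. phiU (state \<omega> w) * ennreal (exp (- (M * n / 2))))" for \<omega>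
  define G4 where "G4 \<omega> = (\<Sum>w\<in>{w. length w = n}. ennreal (exp (- \<theta>' * SS m \<omega> w)) * ennreal (exp (\<theta>' * (M1 ^ 2 * n / M))))" for \<omega>
  have G1m[measurable]: "G1 \<in> borel_measurable tree_space"
    unfolding G1_def by (rule sum_state_meas) simp
  have G2m[measurable]: "G2 \<in> borel_measurable tree_space"
    unfolding G2_def by (intro borel_measurable_sum sum_state_meas) simp
  have G3m[measurable]: "G3 \<in> borel_measurable tree_space"
  proof -
    have "(\<lambda>\<omega>. \<Sum>w\<in>{w. length w = Suc n}. (\<lambda>st. phiU st * ennreal (exp (- (M * n / 2)))) (state \<omega> w)) \<in> borel_measurable tree_space"
      by (rule sum_state_meas) simp
    then show ?thesis unfolding G3_def by simp
  qed
  have G4m[measurable]: "G4 \<in> borel_measurable tree_space"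
    unfolding G4_def by (intro borel_measurable_sum) (use SS_meas in measurable)
  have cover: "1 \<le> G1 \<omega> + G2 \<omega> + G3 \<omega> + G4 \<omega>" if E: "\<omega> \<in> ?E" and g: "good \<omega>" for \<omega>
  proof -
    obtain v where v: "length v = n" and
      bad: "Xv \<omega> v \<notin> {real n / M .. M * real n} \<or> Yv \<omega> v \<notin> {real n / M .. M * real n} \<or>
            Tv \<omega> v < real n / M \<or> Tv \<omega> v + ev \<omega> v / Rf (Xv \<omega> v) (Yv \<omega> v) > M * real n"
      using E by blast
    have sub: "{real n / M1 .. M1 * real n} \<subseteq> {real n / M .. M * real n}"
    proof -
      have "real n / M \<le> real n / M1" using M0 M by (intro divide_left_mono) auto
      moreover have "M1 * real n \<le> M * real n" using M by (intro mult_right_mono) auto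
      ultimately show ?thesis by auto
    qed
    consider (a) "Xv \<omega> v \<notin> {real n / M .. M * real n} \<or> Yv \<omega> v \<notin> {real n / M .. M * real n}"
      | (b) "Tv \<omega> v < real n / M" | (c) "Tv \<omega> v + ev \<omega> v / Rf (Xv \<omega> v) (Yv \<omega> v) > M * real n"
      using bad by blast
    then show ?thesis
    proof cases
      case a
      then have "- ln (fst (state \<omega> v)) \<notin> {real n / M1 .. M1 * real n} \<or> - ln (fst (snd (state \<omega> v))) \<notin> {real n / M1 .. M1 * real n}"
        using sub by (auto simp: Xv_def Yv_def Bv_def Hv_def)
      then have "1 \<le> GXY \<theta> K M1 (real n) (state \<omega> v)"
        by (intro cover_XY state_SU[OF g] M1 \<theta>) (use K in auto)
      also have "\<dots> \<le> G1 \<omega>" unfolding G1_def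
        by (rule member_le_sum) (auto simp: v finite_gen)
      finally show ?thesis by (simp add: add_increasing2 order.trans[OF _ add_increasing2])
    next
      case b
      show ?thesis
      proof (cases "\<exists>j. m \<le> j \<and> j < n \<and> (Xv \<omega> (take j v) \<notin> {real j / M1 .. M1 * real j} \<or> Yv \<omega> (take j v) \<notin> {real j / M1 .. M1 * real j})")
        case True
        then obtain j where j: "m \<le> j" "j < n" and bj: "Xv \<omega> (take j v) \<notin> {real j / M1 .. M1 * real j} \<or> Yv \<omega> (take j v) \<notin> {real j / M1 .. M1 * real j}"
          by blast
        have "1 \<le> GXY \<theta> K M1 (real j) (state \<omega> (take j v))"
          by (intro cover_XY state_SU[OF g] M1 \<theta>) (use K bj in \<open>auto simp: Xv_def Yv_def Bv_def Hv_def\<close>)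
        also have "\<dots> \<le> (\<Sum>w\<in>{w. length w = j}. GXY \<theta> K M1 (real j) (state \<omega> w))"
          by (rule member_le_sum) (use v j in \<open>auto simp: finite_gen\<close>)
        also have "\<dots> \<le> G2 \<omega>" unfolding G2_def
          by (rule member_le_sum[where f = "\<lambda>j. \<Sum>w\<in>{w. length w = j}. GXY \<theta> K M1 (real j) (state \<omega> w)"]) (use j in auto)
        finally have "1 \<le> G2 \<omega>" .
        then show ?thesis by (simp add: add_increasing2 add_increasing order.trans[OF _ add_increasing2])
      next
        case False
        have "SS m \<omega> v \<le> M1 ^ 2 * Tv \<omega> v"
        proof (rule T_ge_SS[OF g])
          fix j assume j: "m \<le> j" "j < length v"
          then have gj: "Xv \<omega> (take j v) \<in> {real j / M1 .. M1 * real j}" "Yv \<omega> (take j v) \<in> {real j / M1 .. M1 * real j}"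
            using False v by auto
          show "Rf (Xv \<omega> (take j v)) (Yv \<omega> (take j v)) \<le> M1 ^ 2"
            by (rule Rf_le[OF M1, of "real j"]) (use gj in auto)
        qed simp
        also have "\<dots> < M1 ^ 2 * (real n / M)" using b M1 by (intro mult_strict_left_mono) auto
        finally have "SS m \<omega> v \<le> M1 ^ 2 * n / M" by simp
        then have "0 \<le> \<theta>' * (M1 ^ 2 * n / M - SS m \<omega> v)" using \<theta>' by simp
        then have "1 \<le> exp (- \<theta>' * SS m \<omega> v) * exp (\<theta>' * (M1 ^ 2 * n / M))"
          by (simp add: exp_add[symmetric] algebra_simps)
        then have "1 \<le> ennreal (exp (- \<theta>' * SS m \<omega> v)) * ennreal (exp (\<theta>' * (M1 ^ 2 * n / M)))"
          by (simp add: ennreal_mult[symmetric] ennreal_1[symmetric] del: ennreal_1)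
        also have "\<dots> \<le> G4 \<omega>" unfolding G4_def
          by (rule member_le_sum[where f = "\<lambda>w. ennreal (exp (- \<theta>' * SS m \<omega> w)) * ennreal (exp (\<theta>' * (M1 ^ 2 * n / M)))"]) (auto simp: v finite_gen)
        finally show ?thesis by (simp add: add_increasing)
      qed
    next
      case c
      let ?u = "v @ [False]"
      have uSU: "state \<omega> ?u \<in> SU" by (rule state_SU[OF g])
      have "M * n < Tv \<omega> ?u" using c by (simp add: Tv_child)
      then have "1 \<le> exp (Tv \<omega> ?u / 2) * exp (- (M * n / 2))"
        by (simp add: exp_add[symmetric])
      then have "1 \<le> ennreal (exp (Tv \<omega> ?u / 2)) * ennreal (exp (- (M * n / 2)))"
        by (simp add: ennreal_mult[symmetric] ennreal_1[symmetric] del: ennreal_1)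
      also have "\<dots> \<le> phiU (state \<omega> ?u) * ennreal (exp (- (M * n / 2)))"
        using phiU_lower[OF uSU] by (intro mult_right_mono) (auto simp: Tv_def)
      also have "\<dots> \<le> G3 \<omega>" unfolding G3_def
        by (rule member_le_sum[where f = "\<lambda>w. phiU (state \<omega> w) * ennreal (exp (- (M * n / 2)))"]) (auto simp: v finite_gen)
      finally show ?thesis by (simp add: add_increasing add_increasing2 order.trans[OF _ add_increasing2])
    qed
  qed
  have "emeasure tree_space ?E \<le> (\<integral>\<^sup>+\<omega>. G1 \<omega> + G2 \<omega> + G3 \<omega> + G4 \<omega> \<partial>tree_space)"
    by (rule markov1[OF E_meas cover])
  also have "\<dots> = (\<integral>\<^sup>+\<omega>. G1 \<omega> \<partial>tree_space) + (\<integral>\<^sup>+\<omega>. G2 \<omega> \<partial>tree_space) + (\<integral>\<^sup>+\<omega>. G3 \<omega> \<partial>tree_space) + (\<integral>\<^sup>+\<omega>. G4 \<omega> \<partial>tree_space)"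
    by (simp add: nn_integral_add)
  also have "\<dots> \<le> ennreal (bXY n) + ennreal (\<Sum>j\<in>{m..<n}. bXY j) + ennreal (8 ^ (Suc n) * exp (- (M * n / 2)))
               + ennreal (2 ^ n / (1 + \<theta>') ^ (n - m) * exp (\<theta>' * (M1 ^ 2 * n / M)))"
  proof (intro add_mono)
    show "(\<integral>\<^sup>+\<omega>. G1 \<omega> \<partial>tree_space) \<le> ennreal (bXY n)"
      unfolding G1_def bXY_def \<rho>_def by (rule intGXY[OF \<theta> K \<delta>])
    have "(\<integral>\<^sup>+\<omega>. G2 \<omega> \<partial>tree_space) = (\<Sum>j\<in>{m..<n}. \<integral>\<^sup>+\<omega>. (\<Sum>w\<in>{w. length w = j}. GXY \<theta> K M1 (real j) (state \<omega> w)) \<partial>tree_space)"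
      unfolding G2_def by (rule nn_integral_sum) (rule sum_state_meas, simp)
    also have "\<dots> \<le> (\<Sum>j\<in>{m..<n}. ennreal (bXY j))"
      unfolding bXY_def \<rho>_def by (intro sum_mono intGXY[OF \<theta> K \<delta>])
    also have "\<dots> = ennreal (\<Sum>j\<in>{m..<n}. bXY j)"
      by (rule sum_ennreal) (use K \<delta> in \<open>auto simp: bXY_def \<rho>_def intro!: add_nonneg_nonneg mult_nonneg_nonneg\<close>)
    finally show "(\<integral>\<^sup>+\<omega>. G2 \<omega> \<partial>tree_space) \<le> ennreal (\<Sum>j\<in>{m..<n}. bXY j)" .
    have "(\<integral>\<^sup>+\<omega>. G3 \<omega> \<partial>tree_space) = ennreal (exp (- (M * n / 2))) * (\<integral>\<^sup>+\<omega>. (\<Sum>w\<in>{w. length w = Suc n}. phiU (state \<omega> w)) \<partial>tree_space)"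
      unfolding G3_def by (subst nn_integral_cmult[symmetric]) (auto intro!: nn_integral_cong simp: sum_distrib_left mult.commute sum_state_meas)
    also have "\<dots> \<le> ennreal (exp (- (M * n / 2))) * 8 ^ Suc n"
      by (intro mult_left_mono intU) simp
    also have "\<dots> = ennreal (8 ^ (Suc n) * exp (- (M * n / 2)))"
      by (simp add: ennreal_mult ennreal_power[symmetric] mult.commute)
    finally show "(\<integral>\<^sup>+\<omega>. G3 \<omega> \<partial>tree_space) \<le> ennreal (8 ^ (Suc n) * exp (- (M * n / 2)))" .
    have "(\<integral>\<^sup>+\<omega>. G4 \<omega> \<partial>tree_space) = ennreal (exp (\<theta>' * (M1 ^ 2 * n / M))) * (\<integral>\<^sup>+\<omega>. (\<Sum>w\<in>{w. length w = n}. ennreal (exp (- \<theta>' * SS m \<omega> w))) \<partial>tree_space)"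
    proof -
      have sm: "(\<lambda>\<omega>. \<Sum>w\<in>{w. length w = n}. ennreal (exp (- \<theta>' * SS m \<omega> w))) \<in> borel_measurable tree_space"
        by (intro borel_measurable_sum) (use SS_meas in measurable)
      have "(\<integral>\<^sup>+\<omega>. G4 \<omega> \<partial>tree_space) = (\<integral>\<^sup>+\<omega>. ennreal (exp (\<theta>' * (M1 ^ 2 * n / M))) * (\<Sum>w\<in>{w. length w = n}. ennreal (exp (- \<theta>' * SS m \<omega> w))) \<partial>tree_space)"
        unfolding G4_def by (intro nn_integral_cong) (simp only: sum_distrib_left mult.commute)
      also have "\<dots> = ennreal (exp (\<theta>' * (M1 ^ 2 * n / M))) * (\<integral>\<^sup>+\<omega>. (\<Sum>w\<in>{w. length w = n}. ennreal (exp (- \<theta>' * SS m \<omega> w))) \<partial>tree_space)"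
        by (rule nn_integral_cmult[OF sm])
      finally show ?thesis .
    qed
    also have "\<dots> \<le> ennreal (exp (\<theta>' * (M1 ^ 2 * n / M))) * ennreal (2 ^ n / (1 + \<theta>') ^ (n - m))"
      by (intro mult_left_mono intS \<theta>') simp
    also have "\<dots> = ennreal (2 ^ n / (1 + \<theta>') ^ (n - m) * exp (\<theta>' * (M1 ^ 2 * n / M)))"
      using \<theta>' by (simp add: ennreal_mult[symmetric] mult.commute)
    finally show "(\<integral>\<^sup>+\<omega>. G4 \<omega> \<partial>tree_space) \<le> ennreal (2 ^ n / (1 + \<theta>') ^ (n - m) * exp (\<theta>' * (M1 ^ 2 * n / M)))" .
  qed
  also have "\<dots> = ennreal (bXY n + (\<Sum>j\<in>{m..<n}. bXY j) + 8 ^ (Suc n) * exp (- (M * n / 2))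
               + 2 ^ n / (1 + \<theta>') ^ (n - m) * exp (\<theta>' * (M1 ^ 2 * n / M)))"
  proof -
    have b0: "0 \<le> bXY k" for k unfolding bXY_def \<rho>_def using K \<delta> by (intro add_nonneg_nonneg mult_nonneg_nonneg zero_le_power) auto
    have s0: "0 \<le> (\<Sum>j\<in>{m..<n}. bXY j)" by (intro sum_nonneg b0)
    show ?thesis using b0[of n] s0 \<theta>'
      by (simp add: ennreal_plus[symmetric] del: ennreal_plus)
  qed
  finally show ?thesis .
qed

lemma exp1_ge2: "2 \<le> exp (1::real)"
  using exp_ge_add_one_self[of 1] by simp

lemma pow_le_exp: fixes b :: real assumes "0 \<le> b" "b \<le> exp a" shows "b ^ k \<le> exp (a * k)"
proof -
  have "b ^ k \<le> exp a ^ k" using assms by (intro power_mono) auto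
  also have "\<dots> = exp (a * k)" by (simp add: exp_of_nat_mult[symmetric] mult.commute)
  finally show ?thesis .
qed

lemma Vbound:
  fixes \<theta> K M1 c k :: real
  assumes M1: "1 \<le> M1" and \<theta>: "0 \<le> \<theta>" and K: "0 \<le> K" and k: "0 \<le> k"
    and hc: "\<theta> + K * ln (M1 ^ 2 + 2) \<le> c * M1"
  shows "V \<theta> K (k / M1) (M1 * k) \<le> c * k + K * ln (M1 ^ 2 + 2)"
proof -
  define a where "a = k / M1"
  define \<Lambda> where "\<Lambda> = ln (M1 ^ 2 + 2)"
  have a: "0 \<le> a" using k M1 by (simp add: a_def)
  have "a + M1 * k + 2 \<le> (M1 ^ 2 + 2) * (a + 1)"
  proof -
    have "(M1 ^ 2 + 2) * (a + 1) = M1 * k + 2 * a + M1 ^ 2 + 2"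
      using M1 by (simp add: a_def power2_eq_square field_simps)
    moreover have "1 \<le> M1 ^ 2" using M1 by (simp add: one_le_power)
    ultimately show ?thesis using a by linarith
  qed
  then have "ln (a + M1 * k + 2) \<le> ln ((M1 ^ 2 + 2) * (a + 1))"
  proof -
    have mk: "0 \<le> M1 * k" using M1 k by simp
    have "0 < (M1 ^ 2 + 2) * (a + 1)" using a by (intro mult_pos_pos) (auto simp: add_pos_nonneg add_nonneg_pos)
    then show ?thesis using \<open>a + M1 * k + 2 \<le> (M1 ^ 2 + 2) * (a + 1)\<close> mk a by (subst ln_le_cancel_iff) auto
  qed
  also have "\<dots> = \<Lambda> + ln (a + 1)"
  proof -
    have p2: "0 < M1 ^ 2 + 2" by (simp add: add_nonneg_pos)
    show ?thesis using a p2 by (simp add: ln_mult \<Lambda>_def)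
  qed
  finally have L: "ln (a + M1 * k + 2) - ln (a + 1) \<le> \<Lambda>" by simp
  have "V \<theta> K a (M1 * k) = \<theta> * a + K * ((a + 1) * (ln (a + M1 * k + 2) - ln (a + 1)))" by (simp add: V_def)
  also have "\<dots> \<le> \<theta> * a + K * ((a + 1) * \<Lambda>)"
    using L a K by (intro add_left_mono mult_left_mono) auto
  also have "\<dots> = a * (\<theta> + K * \<Lambda>) + K * \<Lambda>" by (simp add: algebra_simps)
  also have "\<dots> \<le> a * (c * M1) + K * \<Lambda>" using hc a by (intro add_right_mono mult_left_mono) (auto simp: \<Lambda>_def)
  also have "a * (c * M1) = c * k" using M1 by (simp add: a_def)
  finally show ?thesis by (simp add: a_def \<Lambda>_def)
qed

lemma Lambda_bound:
  fixes A :: real assumes A: "1 \<le> A"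
  shows "ln ((A ^ 2) ^ 2 + 2) \<le> 2 + 4 * A"
proof -
  have A4: "1 \<le> A ^ 4" using A by (simp add: one_le_power)
  have "(A ^ 2) ^ 2 + 2 \<le> 3 * A ^ 4" using A4 by (simp add: power_mult[symmetric])
  then have "ln ((A ^ 2) ^ 2 + 2) \<le> ln (3 * A ^ 4)" using A4 by (subst ln_le_cancel_iff) auto
  also have "\<dots> = ln 3 + 4 * ln A" using A by (simp add: ln_mult ln_realpow)
  also have "ln 3 \<le> (2::real)"
  proof -
    have "(3::real) \<le> exp 1 ^ 2" using exp1_ge2 power_mono[OF exp1_ge2, of 2] by simp
    also have "exp 1 ^ 2 = exp (2::real)" by (simp add: exp_of_nat_mult[symmetric])
    finally have "ln (3::real) \<le> ln (exp 2)" by (subst ln_le_cancel_iff) auto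
    then show ?thesis by simp
  qed
  also have "ln A \<le> A" using ln_le_minus_one[of A] A by simp
  finally show ?thesis by simp
qed

theorem lemma4p1:
  fixes \<kappa> :: real
  assumes "\<kappa> > 0"
  shows "\<exists>M::real > 1. \<exists>N::nat. \<forall>n\<ge>N.
    (let E = {\<omega> \<in> space tree_space. \<exists>v::vertex. length v = n \<and>
               (Xv \<omega> v \<notin> {real n / M .. M * real n} \<or>
                Yv \<omega> v \<notin> {real n / M .. M * real n} \<or>
                Tv \<omega> v < real n / M \<or>
                Tv \<omega> v + ev \<omega> v / Rf (Xv \<omega> v) (Yv \<omega> v) > M * real n)}
     in E \<in> sets tree_space \<and> measure tree_space E \<le> exp (- \<kappa> * real n))"
proof -
  have \<kappa>: "0 < \<kappa>" by fact
  define c where "c = 2 * \<kappa> + 4"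
  have c: "4 \<le> c" using \<kappa> by (simp add: c_def)
  define \<epsilon> where "\<epsilon> = exp (- 2 * c) / 8"
  have \<epsilon>0: "0 < \<epsilon>" by (simp add: \<epsilon>_def)
  have \<epsilon>1: "\<epsilon> < 1"
  proof -
    have "exp (- 2 * c) \<le> 1" using c by simp
    then show ?thesis unfolding \<epsilon>_def by linarith
  qed
  define \<delta> where "\<delta> = \<epsilon>"
  define \<theta> where "\<theta> = - ln \<epsilon> / \<epsilon>"
  define K where "K = 3 / \<epsilon> ^ 2"
  have \<theta>0: "0 \<le> \<theta>"
  proof -
    have "ln \<epsilon> \<le> 0" using \<epsilon>0 \<epsilon>1 by simp
    then have "0 \<le> - ln \<epsilon>" by simp
    then show ?thesis unfolding \<theta>_def using \<epsilon>0 by (rule divide_nonneg_pos)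
  qed
  have K0: "0 < K" using \<epsilon>0 by (simp add: K_def)
  have \<delta>: "0 < \<delta>" "\<delta> \<le> 1" using \<epsilon>0 \<epsilon>1 by (auto simp: \<delta>_def)
  have e\<theta>: "exp (- (\<theta> * \<delta>)) = \<epsilon>" using \<epsilon>0 by (simp add: \<theta>_def \<delta>_def)
  have eK: "3 / (K * \<delta>) = \<epsilon>" using \<epsilon>0 by (simp add: K_def \<delta>_def power2_eq_square)
  define \<rho> where "\<rho> = 2 * (\<delta> + exp (- (\<theta> * \<delta>)) + 3 / (K * \<delta>))"
  have \<rho>6: "\<rho> = 6 * \<epsilon>" unfolding \<rho>_def e\<theta> eK by (simp add: \<delta>_def)
  have \<rho>0: "0 \<le> \<rho>" using \<epsilon>0 by (simp add: \<rho>6)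
  have \<rho>1: "\<rho> \<le> exp (- 2 * c)" unfolding \<rho>6 \<epsilon>_def by simp
  define A where "A = (\<theta> + 6 * K) / c + 2 * c + 6"
  have cA: "\<theta> + 6 * K \<le> c * A"
  proof -
    have "c * ((\<theta> + 6 * K) / c) = \<theta> + 6 * K" using c by simp
    moreover have "0 \<le> c * (2 * c + 6)" using c by simp
    ultimately show ?thesis unfolding A_def by (simp add: distrib_left)
  qed
  have A1: "2 * c + 6 \<le> A" using \<theta>0 K0 c unfolding A_def by simp
  have A0: "1 \<le> A" using A1 c by simp
  define M1 where "M1 = A ^ 2"
  have M1A: "A \<le> M1" using A0 by (simp add: M1_def power2_eq_square)
  have M1: "1 \<le> M1" using A0 M1A by simp
  define \<Lambda> where "\<Lambda> = ln (M1 ^ 2 + 2)"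
  have \<Lambda>: "\<Lambda> \<le> 2 + 4 * A" unfolding \<Lambda>_def M1_def by (rule Lambda_bound[OF A0])
  have hc: "\<theta> + K * \<Lambda> \<le> c * M1"
  proof -
    have "\<theta> + K * \<Lambda> \<le> \<theta> + K * (2 + 4 * A)" using \<Lambda> K0 by simp
    also have "\<dots> \<le> (\<theta> + 6 * K) * A"
    proof -
      have "\<theta> \<le> \<theta> * A" using \<theta>0 A0 by (simp add: mult_le_cancel_left1)
      moreover have "2 * K \<le> 2 * K * A" using K0 A0 by simp
      ultimately show ?thesis by (simp add: algebra_simps)
    qed
    also have "\<dots> \<le> c * A * A" using cA A0 by (intro mult_right_mono) auto
    also have "\<dots> = c * M1" by (simp add: M1_def power2_eq_square)
    finally show ?thesis .
  qed
  define \<theta>' where "\<theta>' = exp (2 * c + 4) - 1"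
  have \<theta>'1: "1 \<le> \<theta>'" using exp_ge_add_one_self[of "2 * c + 4"] c by (simp add: \<theta>'_def)
  have \<theta>'e: "1 + \<theta>' = exp (2 * c + 4)" by (simp add: \<theta>'_def)
  define M where "M = M1 ^ 2 * \<theta>'"
  have MM1: "M1 \<le> M"
  proof -
    have "M1 \<le> M1 ^ 2" using M1 by (simp add: power2_eq_square)
    also have "\<dots> \<le> M1 ^ 2 * \<theta>'" using mult_left_mono[OF \<theta>'1, of "M1 ^ 2"] by simp
    finally show ?thesis by (simp add: M_def)
  qed
  have M1gt: "1 < M1" using M1A A1 c by simp
  have Mgt: "1 < M" using M1gt MM1 by simp
  have \<theta>'M: "\<theta>' * (M1 ^ 2 * x / M) = x" for x
    using \<theta>'1 M1 by (simp add: M_def)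
  define C1 where "C1 = 1 + 2 * exp (K * \<Lambda>)"
  define Ct where "Ct = C1 + 9 + C1 * exp (c / 2)"
  have C10: "0 \<le> C1" by (simp add: C1_def)
  have Ct0: "0 < Ct" using C10 by (simp add: Ct_def add_pos_nonneg)
  define bXY where "bXY = (\<lambda>k::nat. 8 ^ k * exp (- (M1 * k / 2)) + 2 * \<rho> ^ k * exp (V \<theta> K (k / M1) (M1 * k)))"
  have e3: "8 \<le> exp (3::real)"
  proof -
    have "(8::real) = 2 ^ 3" by simp
    also have "\<dots> \<le> exp 1 ^ 3" by (rule power_mono[OF exp1_ge2]) simp
    also have "\<dots> = exp 3" by (simp add: exp_of_nat_mult[symmetric])
    finally show ?thesis .
  qed
  have term8: "8 ^ k * exp (- (M1 * k / 2)) \<le> exp (- c * k)" for k :: nat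
  proof -
    have "(8::real) ^ k \<le> exp (3 * real k)" by (rule pow_le_exp[OF _ e3]) simp
    then have "8 ^ k * exp (- (M1 * k / 2)) \<le> exp (3 * real k) * exp (- (M1 * k / 2))" by simp
    also have "\<dots> = exp (3 * real k - M1 * k / 2)" by (simp add: exp_add[symmetric])
    also have "\<dots> \<le> exp (- c * k)"
    proof -
      have "(c + 3) * k \<le> M1 / 2 * k" using M1A A1 by (intro mult_right_mono) auto
      then show ?thesis by (simp add: algebra_simps)
    qed
    finally show ?thesis .
  qed
  have bXY_le: "bXY k \<le> C1 * exp (- c * k)" for k :: nat
  proof -
    have "\<rho> ^ k \<le> exp (- 2 * c * k)" using pow_le_exp[OF \<rho>0 \<rho>1, of k] by simp
    moreover have "V \<theta> K (k / M1) (M1 * k) \<le> c * k + K * \<Lambda>"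
      unfolding \<Lambda>_def by (rule Vbound[OF M1 \<theta>0 _ _ hc[unfolded \<Lambda>_def]]) (use K0 in auto)
    ultimately have "2 * \<rho> ^ k * exp (V \<theta> K (k / M1) (M1 * k)) \<le> 2 * exp (- 2 * c * k) * exp (c * k + K * \<Lambda>)"
      using \<rho>0 by (intro mult_mono) auto
    also have "\<dots> = 2 * exp (K * \<Lambda>) * exp (- c * k)" by (simp add: exp_add[symmetric] algebra_simps)
    finally show ?thesis using term8[of k] unfolding bXY_def C1_def by (simp add: algebra_simps)
  qed
  show ?thesis
  proof (intro exI[of _ M] conjI Mgt exI[of _ "nat \<lceil>ln Ct\<rceil>"] allI impI)
    fix n :: nat assume nN: "nat \<lceil>ln Ct\<rceil> \<le> n"
    define m where "m = n div 2"
    have mn: "m \<le> n" "real n \<le> 2 * real m + 1" "real n \<le> 2 * real (n - m)" unfolding m_def by linarith+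
    define e1 where "e1 = exp (- (\<kappa> + 1) * n)"
    have ec: "exp (- c * n) \<le> e1"
    proof -
      have "(- c) * real n \<le> (- (\<kappa> + 1)) * real n" by (rule mult_right_mono) (use \<kappa> in \<open>auto simp: c_def\<close>)
      then show ?thesis unfolding e1_def by simp
    qed
    have T1: "bXY n \<le> C1 * e1" using bXY_le[of n] ec C10 by (meson mult_left_mono order_trans)
    have T2: "(\<Sum>j\<in>{m..<n}. bXY j) \<le> C1 * exp (c / 2) * e1"
    proof -
      have "(\<Sum>j\<in>{m..<n}. bXY j) \<le> (\<Sum>j\<in>{m..<n}. C1 * exp (- c * m))"
      proof (intro sum_mono)
        fix j assume j: "j \<in> {m..<n}"
        have "exp (- c * j) \<le> exp (- c * m)" using j c by simp
        then show "bXY j \<le> C1 * exp (- c * m)" using bXY_le[of j] C10 by (meson mult_left_mono order_trans)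
      qed
      also have "\<dots> = real (n - m) * (C1 * exp (- c * m))" by simp
      also have "\<dots> \<le> real n * (C1 * exp (- c * m))" using C10 by (intro mult_right_mono) auto
      also have "\<dots> \<le> exp (real n) * (C1 * exp (c / 2 - c * n / 2))"
      proof (rule mult_mono)
        show "real n \<le> exp (real n)" using exp_ge_add_one_self[of "real n"] by linarith
        have "c * real n \<le> c * (2 * real m + 1)" using mn(2) c by (intro mult_left_mono) auto
        then have h: "c * real n \<le> 2 * (c * real m) + c" by (simp add: algebra_simps)
        have "- c * m \<le> c / 2 - c * n / 2" using h by linarith
        then show "C1 * exp (- c * m) \<le> C1 * exp (c / 2 - c * n / 2)" using C10 by (intro mult_left_mono) auto
      qed (use C10 in auto)
      also have "\<dots> = C1 * exp (c / 2) * exp (real n - c * n / 2)" by (simp add: exp_add[symmetric] exp_diff algebra_simps)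
      also have "exp (real n - c * n / 2) = e1" unfolding e1_def c_def by (simp add: algebra_simps)
      finally show ?thesis .
    qed
    have T3: "8 ^ Suc n * exp (- (M * n / 2)) \<le> 8 * e1"
    proof -
      have "exp (- (M * n / 2)) \<le> exp (- (M1 * n / 2))" using MM1 by (simp add: mult_right_mono)
      then have "8 ^ Suc n * exp (- (M * n / 2)) \<le> 8 * (8 ^ n * exp (- (M1 * n / 2)))" by simp
      also have "\<dots> \<le> 8 * exp (- c * n)" using term8[of n] by simp
      also have "\<dots> \<le> 8 * e1" using ec by simp
      finally show ?thesis .
    qed
    have T4: "2 ^ n / (1 + \<theta>') ^ (n - m) * exp (\<theta>' * (M1 ^ 2 * n / M)) \<le> e1"
    proof -
      have p2: "(2::real) ^ n \<le> exp (1 * real n)" by (rule pow_le_exp[OF _ exp1_ge2]) simp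
      have pe: "(1 + \<theta>') ^ (n - m) = exp ((2 * c + 4) * real (n - m))"
        unfolding \<theta>'e by (simp add: exp_of_nat_mult[symmetric] mult.commute)
      have "2 ^ n / exp ((2 * c + 4) * real (n - m)) \<le> exp (real n) / exp ((2 * c + 4) * real (n - m))"
        by (rule divide_right_mono) (use p2 in auto)
      then have "2 ^ n / exp ((2 * c + 4) * real (n - m)) * exp (real n) \<le> exp (real n) / exp ((2 * c + 4) * real (n - m)) * exp (real n)"
        by (rule mult_right_mono) simp
      then have "2 ^ n / (1 + \<theta>') ^ (n - m) * exp (\<theta>' * (M1 ^ 2 * n / M)) \<le> exp (real n) / exp ((2 * c + 4) * real (n - m)) * exp (real n)"
        unfolding \<theta>'M pe .
      also have "\<dots> = exp (2 * real n - (2 * c + 4) * real (n - m))" by (simp add: exp_diff exp_add[symmetric])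
      also have "\<dots> \<le> exp (- c * n)"
      proof -
        have "(c + 2) * real n \<le> (c + 2) * (2 * real (n - m))" using mn(3) c by (intro mult_left_mono) auto
        then show ?thesis by (simp add: algebra_simps)
      qed
      also have "\<dots> \<le> e1" by (rule ec)
      finally show ?thesis .
    qed
    have tot: "bXY n + (\<Sum>j\<in>{m..<n}. bXY j) + 8 ^ (Suc n) * exp (- (M * n / 2))
               + 2 ^ n / (1 + \<theta>') ^ (n - m) * exp (\<theta>' * (M1 ^ 2 * n / M)) \<le> Ct * e1"
      using T1 T2 T3 T4 unfolding Ct_def by (simp add: algebra_simps)
    also have "Ct * e1 \<le> exp (- \<kappa> * n)"
    proof -
      have "ln Ct \<le> real n" using nN by linarith
      then have "Ct \<le> exp (real n)" using Ct0 by (metis exp_le_cancel_iff exp_ln)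
      then have "Ct * e1 \<le> exp (real n) * e1" by (simp add: e1_def)
      also have "\<dots> = exp (- \<kappa> * n)" unfolding e1_def by (simp add: exp_add[symmetric] algebra_simps)
      finally show ?thesis .
    qed
    finally have tot': "bXY n + (\<Sum>j\<in>{m..<n}. bXY j) + 8 ^ (Suc n) * exp (- (M * n / 2))
               + 2 ^ n / (1 + \<theta>') ^ (n - m) * exp (\<theta>' * (M1 ^ 2 * n / M)) \<le> exp (- \<kappa> * n)" .
    let ?E = "{\<omega> \<in> space tree_space. \<exists>v::vertex. length v = n \<and>
               (Xv \<omega> v \<notin> {real n / M .. M * real n} \<or>
                Yv \<omega> v \<notin> {real n / M .. M * real n} \<or>
                Tv \<omega> v < real n / M \<or>
                Tv \<omega> v + ev \<omega> v / Rf (Xv \<omega> v) (Yv \<omega> v) > M * real n)}"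
    have em: "emeasure tree_space ?E \<le> ennreal (bXY n + (\<Sum>j\<in>{m..<n}. bXY j) + 8 ^ (Suc n) * exp (- (M * n / 2))
               + 2 ^ n / (1 + \<theta>') ^ (n - m) * exp (\<theta>' * (M1 ^ 2 * n / M)))"
      using main_bound[OF \<theta>0 K0 \<delta> M1 MM1, of \<theta>' n] \<theta>'1
      unfolding bXY_def \<rho>_def m_def by simp
    also have "\<dots> \<le> ennreal (exp (- \<kappa> * n))" using tot' by (rule ennreal_leI)
    finally have em2: "emeasure tree_space ?E \<le> ennreal (exp (- \<kappa> * n))" .
    interpret T: prob_space tree_space by (rule prob_tree)
    have "measure tree_space ?E \<le> exp (- \<kappa> * n)"
      using em2 by (simp add: T.emeasure_eq_measure)
    then show "let E = ?E in E \<in> sets tree_space \<and> measure tree_space E \<le> exp (- \<kappa> * real n)"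
      using E_meas by simp
  qed
qed

end
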